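(* Let $R$ be a semiprime left Goldie ring, let $\mathcal{C}$ be the set of regular elements of $R$, write its classical left quotient ring as $Q_{l,cl}(R)=\prod_{i=1}^nQ_i$ with $Q_1,\ldots,Q_n$ simple Artinian rings, and let $\sigma:R\to Q_{l,cl}(R)$, $r\mapsto\frac{r}{1}$. Then: (1) $\mathcal{C}\subseteq S$ for all $S\in\max\mathrm{Den}_l(R)$; (2) $\max\mathrm{Den}_l(R)=\{S_1,\ldots,S_n\}$ and $\max\mathrm{Den}_l(Q_{l,cl}(R))=\{S_1',\ldots,S_n'\}$, where $S_i':=Q_1\times\cdots\times Q_i^*\times\cdots\times Q_n$ ($Q_i^*$ the group of units of $Q_i$, in the $i$-th place) and $S_i:=\sigma^{-1}(S_i')$; the map $\max\mathrm{Den}_l(R)\to\max\mathrm{Den}_l(Q_{l,cl}(R))$, $S\mapsto\widetilde{S}$, is a bijection with inverse $\mathcal{T}\mapsto\sigma^{-1}(\mathcal{T})$, where $\widetilde{S}$ is the multiplicative monoid generated in $Q_{l,cl}(R)$ by $\sigma(S)$ and $\{c^{-1}:c\in\mathcal{C}\}$; (3) $S_i^{-1}R\cong Q_i$ for $i=1,\ldots,n$.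
   Context: All rings are associative with $1$. A multiplicative subset $S$ of $R$ ($1\in S$, $0\notin S$, closed under multiplication) is a left Ore set if $Sr\cap Rs\neq\emptyset$ for all $r\in R$, $s\in S$. A left Ore set $S$ is a left denominator set if $rs=0$ ($r\in R$, $s\in S$) implies $tr=0$ for some $t\in S$; $S^{-1}R$ is the left localization. $\max\mathrm{Den}_l(R)$ is the set of maximal elements, under inclusion, of the set of left denominator sets of $R$. The classical left quotient ring is $Q_{l,cl}(R):=\mathcal{C}^{-1}R$ (which exists and is semisimple Artinian for semiprime left Goldie $R$ by Goldie's theorem). *)

theory Defs
  imports "HOL-Algebra.Algebra"
begin

definition left_ideal :: "'a set \<Rightarrow> ('a, 'm) ring_scheme \<Rightarrow> bool" where
  "left_ideal L R \<longleftrightarrow> additive_subgroup L R \<and>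
     (\<forall>r\<in>carrier R. \<forall>x\<in>L. r \<otimes>\<^bsub>R\<^esub> x \<in> L)"

definition regular_elems :: "('a, 'm) ring_scheme \<Rightarrow> 'a set" where
  "regular_elems R = {c \<in> carrier R. \<forall>x\<in>carrier R.
      (c \<otimes>\<^bsub>R\<^esub> x = \<zero>\<^bsub>R\<^esub> \<longrightarrow> x = \<zero>\<^bsub>R\<^esub>) \<and>
      (x \<otimes>\<^bsub>R\<^esub> c = \<zero>\<^bsub>R\<^esub> \<longrightarrow> x = \<zero>\<^bsub>R\<^esub>)}"

definition semiprime_ring :: "('a, 'm) ring_scheme \<Rightarrow> bool" where
  "semiprime_ring R \<longleftrightarrow> ring R \<and>
     (\<forall>I. ideal I R \<and> (\<forall>a\<in>I. \<forall>b\<in>I. a \<otimes>\<^bsub>R\<^esub> b = \<zero>\<^bsub>R\<^esub>) \<longrightarrow> I = {\<zero>\<^bsub>R\<^esub>})"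

definition left_annihilator :: "('a, 'm) ring_scheme \<Rightarrow> 'a set \<Rightarrow> 'a set" where
  "left_annihilator R Y = {r \<in> carrier R. \<forall>x\<in>Y. r \<otimes>\<^bsub>R\<^esub> x = \<zero>\<^bsub>R\<^esub>}"

text \<open>Left Goldie: ACC on left annihilators and no infinite direct sums of nonzero left ideals.\<close>
definition left_Goldie :: "('a, 'm) ring_scheme \<Rightarrow> bool" where
  "left_Goldie R \<longleftrightarrow> ring R \<and>
     \<not> (\<exists>A :: nat \<Rightarrow> 'a set.
          (\<forall>k. \<exists>Y\<subseteq>carrier R. A k = left_annihilator R Y) \<and> (\<forall>k. A k \<subset> A (Suc k))) \<and>
     \<not> (\<exists>L :: nat \<Rightarrow> 'a set.
          (\<forall>k. left_ideal (L k) R \<and> L k \<noteq> {\<zero>\<^bsub>R\<^esub>}) \<and>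
          (\<forall>k x. (\<forall>i\<le>k. x i \<in> L i) \<and> finsum R x {..k} = \<zero>\<^bsub>R\<^esub>
                   \<longrightarrow> (\<forall>i\<le>k. x i = \<zero>\<^bsub>R\<^esub>)))"

definition simple_ring :: "('a, 'm) ring_scheme \<Rightarrow> bool" where
  "simple_ring R \<longleftrightarrow> ring R \<and> \<one>\<^bsub>R\<^esub> \<noteq> \<zero>\<^bsub>R\<^esub> \<and>
     (\<forall>I. ideal I R \<longrightarrow> I = {\<zero>\<^bsub>R\<^esub>} \<or> I = carrier R)"

definition left_Artinian :: "('a, 'm) ring_scheme \<Rightarrow> bool" where
  "left_Artinian R \<longleftrightarrow> ring R \<and>
     \<not> (\<exists>L :: nat \<Rightarrow> 'a set. (\<forall>k. left_ideal (L k) R) \<and> (\<forall>k. L (Suc k) \<subset> L k))"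

definition simple_Artinian :: "('a, 'm) ring_scheme \<Rightarrow> bool" where
  "simple_Artinian R \<longleftrightarrow> simple_ring R \<and> left_Artinian R"

definition mult_subset :: "('a, 'm) ring_scheme \<Rightarrow> 'a set \<Rightarrow> bool" where
  "mult_subset R S \<longleftrightarrow> S \<subseteq> carrier R \<and> \<one>\<^bsub>R\<^esub> \<in> S \<and> \<zero>\<^bsub>R\<^esub> \<notin> S \<and>
     (\<forall>a\<in>S. \<forall>b\<in>S. a \<otimes>\<^bsub>R\<^esub> b \<in> S)"

definition left_Ore_set :: "('a, 'm) ring_scheme \<Rightarrow> 'a set \<Rightarrow> bool" where
  "left_Ore_set R S \<longleftrightarrow> mult_subset R S \<and>
     (\<forall>r\<in>carrier R. \<forall>s\<in>S. \<exists>s'\<in>S. \<exists>r'\<in>carrier R. s' \<otimes>\<^bsub>R\<^esub> r = r' \<otimes>\<^bsub>R\<^esub> s)"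

definition left_den_set :: "('a, 'm) ring_scheme \<Rightarrow> 'a set \<Rightarrow> bool" where
  "left_den_set R S \<longleftrightarrow> left_Ore_set R S \<and>
     (\<forall>r\<in>carrier R. \<forall>s\<in>S. r \<otimes>\<^bsub>R\<^esub> s = \<zero>\<^bsub>R\<^esub> \<longrightarrow> (\<exists>t\<in>S. t \<otimes>\<^bsub>R\<^esub> r = \<zero>\<^bsub>R\<^esub>))"

definition maxDen_l :: "('a, 'm) ring_scheme \<Rightarrow> 'a set set" where
  "maxDen_l R = {S. left_den_set R S \<and> (\<forall>T. left_den_set R T \<and> S \<subseteq> T \<longrightarrow> T = S)}"

text \<open>This determines \<open>(Q,\<sigma>)\<close> up to unique isomorphism.\<close>
definition is_left_localization ::
  "('a, 'm) ring_scheme \<Rightarrow> 'a set \<Rightarrow> ('b, 'n) ring_scheme \<Rightarrow> ('a \<Rightarrow> 'b) \<Rightarrow> bool" where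
  "is_left_localization R S Q \<sigma> \<longleftrightarrow> ring R \<and> ring Q \<and> left_den_set R S \<and>
     \<sigma> \<in> ring_hom R Q \<and>
     (\<forall>s\<in>S. \<sigma> s \<in> Units Q) \<and>
     (\<forall>q\<in>carrier Q. \<exists>s\<in>S. \<exists>r\<in>carrier R. q = inv\<^bsub>Q\<^esub> (\<sigma> s) \<otimes>\<^bsub>Q\<^esub> \<sigma> r) \<and>
     (\<forall>r\<in>carrier R. \<sigma> r = \<zero>\<^bsub>Q\<^esub> \<longleftrightarrow> (\<exists>s\<in>S. s \<otimes>\<^bsub>R\<^esub> r = \<zero>\<^bsub>R\<^esub>))"

definition mult_monoid_gen :: "('b, 'n) ring_scheme \<Rightarrow> 'b set \<Rightarrow> 'b set" where
  "mult_monoid_gen Q Y = \<Inter>{M. M \<subseteq> carrier Q \<and> \<one>\<^bsub>Q\<^esub> \<in> M \<and> Y \<subseteq> M \<and>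
                               (\<forall>a\<in>M. \<forall>b\<in>M. a \<otimes>\<^bsub>Q\<^esub> b \<in> M)}"

definition tilde_set ::
  "('a, 'm) ring_scheme \<Rightarrow> ('b, 'n) ring_scheme \<Rightarrow> ('a \<Rightarrow> 'b) \<Rightarrow> 'a set \<Rightarrow> 'b set" where
  "tilde_set R Q \<sigma> S = mult_monoid_gen Q (\<sigma> ` S \<union> {inv\<^bsub>Q\<^esub> (\<sigma> c) | c. c \<in> regular_elems R})"

end

theory Submission
  imports Defs
begin

lemma ring_ideal_intro:
  fixes A (structure)
  assumes "ring A" "I \<subseteq> carrier A" "\<zero> \<in> I" "\<And>a b. a \<in> I \<Longrightarrow> b \<in> I \<Longrightarrow> a \<oplus> b \<in> I"
    "\<And>a. a \<in> I \<Longrightarrow> \<ominus> a \<in> I"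
    "\<And>a x. a \<in> I \<Longrightarrow> x \<in> carrier A \<Longrightarrow> x \<otimes> a \<in> I"
    "\<And>a x. a \<in> I \<Longrightarrow> x \<in> carrier A \<Longrightarrow> a \<otimes> x \<in> I"
  shows "ideal I A"
proof (rule idealI[OF assms(1)])
  show "subgroup I (add_monoid A)"
    by (rule subgroup.intro) (use assms in \<open>auto simp: a_inv_def[symmetric]\<close>)
qed (use assms in auto)

lemma ring_left_ideal_intro:
  fixes A (structure)
  assumes "ring A" "I \<subseteq> carrier A" "\<zero> \<in> I" "\<And>a b. a \<in> I \<Longrightarrow> b \<in> I \<Longrightarrow> a \<oplus> b \<in> I"
    "\<And>a. a \<in> I \<Longrightarrow> \<ominus> a \<in> I"
    "\<And>a x. a \<in> I \<Longrightarrow> x \<in> carrier A \<Longrightarrow> x \<otimes> a \<in> I"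
  shows "left_ideal I A"
  unfolding left_ideal_def
proof (intro conjI ballI)
  show "additive_subgroup I A"
    by (rule additive_subgroupI, rule subgroup.intro) (use assms in \<open>auto simp: a_inv_def[symmetric]\<close>)
qed (use assms in auto)

lemma art_regular_unit:
  fixes A (structure)
  assumes art: "left_Artinian A" and a: "a \<in> carrier A"
    and rc: "\<And>x. x \<in> carrier A \<Longrightarrow> x \<otimes> a = \<zero> \<Longrightarrow> x = \<zero>"
    and lc: "\<And>x. x \<in> carrier A \<Longrightarrow> a \<otimes> x = \<zero> \<Longrightarrow> x = \<zero>"
  shows "a \<in> Units A"
proof -
  interpret ring A using art unfolding left_Artinian_def by blast
  define L where "L k = {x \<otimes> a [^] (k::nat) | x. x \<in> carrier A}" for k
  have li: "left_ideal (L k) A" for k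
  proof (rule ring_left_ideal_intro)
    show "ring A" by (rule ring_axioms)
    show "L k \<subseteq> carrier A" using a by (auto simp: L_def)
    show "\<zero> \<in> L k" unfolding L_def using a by (auto intro!: exI[of _ \<zero>])
    show "x \<oplus> y \<in> L k" if "x \<in> L k" "y \<in> L k" for x y
    proof -
      from that obtain x1 y1 where "x1 \<in> carrier A" "y1 \<in> carrier A" "x = x1 \<otimes> a [^] k" "y = y1 \<otimes> a [^] k"
        unfolding L_def by blast
      then show ?thesis using a unfolding L_def by (auto simp: l_distr intro!: exI[of _ "x1 \<oplus> y1"])
    qed
    show "\<ominus> x \<in> L k" if "x \<in> L k" for x
    proof -
      from that obtain x1 where "x1 \<in> carrier A" "x = x1 \<otimes> a [^] k"
        unfolding L_def by blast
      then show ?thesis using a unfolding L_def by (auto simp: l_minus intro!: exI[of _ "\<ominus> x1"])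
    qed
    show "y \<otimes> x \<in> L k" if "x \<in> L k" "y \<in> carrier A" for x y
    proof -
      from that obtain x1 where "x1 \<in> carrier A" "x = x1 \<otimes> a [^] k"
        unfolding L_def by blast
      then show ?thesis using a that unfolding L_def by (auto simp: m_assoc intro!: exI[of _ "y \<otimes> x1"])
    qed
  qed
  have sub: "L (Suc k) \<subseteq> L k" for k
  proof
    fix z assume "z \<in> L (Suc k)"
    then obtain x where x: "x \<in> carrier A" "z = x \<otimes> a [^] Suc k" unfolding L_def by blast
    then have "z = (x \<otimes> a) \<otimes> a [^] k" using a by (metis m_assoc nat_pow_Suc2 nat_pow_closed)
    then show "z \<in> L k" using x a unfolding L_def by blast
  qed
  from art li obtain k where "\<not> L (Suc k) \<subset> L k" unfolding left_Artinian_def by blast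
  with sub have eq: "L k \<subseteq> L (Suc k)" by blast
  have "a [^] k \<in> L k" using a unfolding L_def by (auto intro!: exI[of _ \<one>])
  with eq obtain b where b: "b \<in> carrier A" "a [^] k = b \<otimes> a [^] Suc k" unfolding L_def by blast
  have canc: "\<And>y. y \<in> carrier A \<Longrightarrow> y \<otimes> a [^] (m::nat) = \<zero> \<Longrightarrow> y = \<zero>" for m
  proof (induction m)
    case 0 then show ?case by simp
  next
    case (Suc m)
    have "(y \<otimes> a [^] m) \<otimes> a = \<zero>" using Suc.prems a by (simp add: nat_pow_Suc m_assoc)
    then have "y \<otimes> a [^] m = \<zero>" by (rule rc[rotated]) (use Suc.prems a in simp)
    then show ?case using Suc by simp
  qed
  have "(\<one> \<ominus> b \<otimes> a) \<otimes> a [^] k = \<zero>"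
  proof -
    have "(\<one> \<ominus> b \<otimes> a) \<otimes> a [^] k = a [^] k \<ominus> (b \<otimes> a) \<otimes> a [^] k"
      using a b(1) by (simp add: a_minus_def l_distr l_minus)
    also have "(b \<otimes> a) \<otimes> a [^] k = a [^] k"
    proof -
      have "(b \<otimes> a) \<otimes> a [^] k = b \<otimes> (a \<otimes> a [^] k)" using a b(1) by (simp add: m_assoc)
      also have "\<dots> = b \<otimes> a [^] Suc k" by (subst nat_pow_Suc2[OF a]) (rule refl)
      also have "\<dots> = a [^] k" by (rule sym[OF b(2)])
      finally show ?thesis .
    qed
    finally show ?thesis using a r_right_minus_eq by simp
  qed
  then have "\<one> \<ominus> b \<otimes> a = \<zero>" using canc[of "\<one> \<ominus> b \<otimes> a" k] a b(1) by simp
  then have ba: "b \<otimes> a = \<one>" using a b(1) r_right_minus_eq by simp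
  have "(a \<otimes> b \<ominus> \<one>) \<otimes> a = \<zero>"
    using a b(1) ba by (simp add: a_minus_def l_distr l_minus m_assoc r_neg)
  then have "a \<otimes> b \<ominus> \<one> = \<zero>" by (rule rc[rotated]) (use a b(1) in simp)
  then have ab: "a \<otimes> b = \<one>" using a b(1) r_right_minus_eq by simp
  show ?thesis using a b(1) ab ba unfolding Units_def by auto
qed


lemma dichotomy:
  fixes R (structure) and A :: "('c, 'k) ring_scheme"
  assumes ringR: "ring R" and sa: "simple_Artinian A"
    and f: "f \<in> ring_hom R A"
    and C: "C \<subseteq> carrier R" "\<one> \<in> C" "\<And>a b. a \<in> C \<Longrightarrow> b \<in> C \<Longrightarrow> a \<otimes> b \<in> C"
           "\<And>c. c \<in> C \<Longrightarrow> f c \<in> Units A"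
    and COre: "\<And>r c. r \<in> carrier R \<Longrightarrow> c \<in> C \<Longrightarrow> \<exists>c'\<in>C. \<exists>r'\<in>carrier R. c' \<otimes> r = r' \<otimes> c"
    and rep: "\<And>y. y \<in> carrier A \<Longrightarrow> \<exists>c\<in>C. \<exists>r\<in>carrier R. y = inv\<^bsub>A\<^esub> (f c) \<otimes>\<^bsub>A\<^esub> f r"
    and T: "T \<subseteq> carrier R" "\<one> \<in> T" "\<And>a b. a \<in> T \<Longrightarrow> b \<in> T \<Longrightarrow> a \<otimes> b \<in> T"
    and TOre: "\<And>r t. r \<in> carrier R \<Longrightarrow> t \<in> T \<Longrightarrow> \<exists>t'\<in>T. \<exists>r'\<in>carrier R. t' \<otimes> r = r' \<otimes> t"
    and H: "\<And>r t. r \<in> carrier R \<Longrightarrow> t \<in> T \<Longrightarrow> f r \<otimes>\<^bsub>A\<^esub> f t = \<zero>\<^bsub>A\<^esub> \<Longrightarrow>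
              \<exists>t'\<in>T. \<exists>v\<in>carrier R. f v \<in> Units A \<and> f t' \<otimes>\<^bsub>A\<^esub> (f v \<otimes>\<^bsub>A\<^esub> f r) = \<zero>\<^bsub>A\<^esub>"
  shows "(\<forall>t\<in>T. f t \<in> Units A) \<or> (\<exists>t\<in>T. f t = \<zero>\<^bsub>A\<^esub>)"
proof -
  interpret R: ring R by (rule ringR)
  have simple: "simple_ring A" and art: "left_Artinian A" using sa unfolding simple_Artinian_def by auto
  interpret A: ring A using simple unfolding simple_ring_def by blast
  have fc: "f x \<in> carrier A" if "x \<in> carrier R" for x using ring_hom_closed[OF f that] .
  have fm: "f (x \<otimes> y) = f x \<otimes>\<^bsub>A\<^esub> f y" if "x \<in> carrier R" "y \<in> carrier R" for x y
    using ring_hom_mult[OF f that] .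
  have f1: "f \<one> = \<one>\<^bsub>A\<^esub>" using ring_hom_one[OF f] .
  have Cc: "c \<in> carrier R" if "c \<in> C" for c using C(1) that by blast
  have Tc: "t \<in> carrier R" if "t \<in> T" for t using T(1) that by blast
  define P where "P z \<longleftrightarrow> (\<exists>t\<in>T. f t \<otimes>\<^bsub>A\<^esub> z = \<zero>\<^bsub>A\<^esub>)" for z
  have P_left: "P (f r \<otimes>\<^bsub>A\<^esub> z)" if "z \<in> carrier A" "P z" "r \<in> carrier R" for z r
  proof -
    from that(2) obtain t where t: "t \<in> T" "f t \<otimes>\<^bsub>A\<^esub> z = \<zero>\<^bsub>A\<^esub>" unfolding P_def by blast
    from TOre[OF that(3) t(1)] obtain t' r' where tr: "t' \<in> T" "r' \<in> carrier R" "t' \<otimes> r = r' \<otimes> t" by blast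
    have "f t' \<otimes>\<^bsub>A\<^esub> (f r \<otimes>\<^bsub>A\<^esub> z) = f (t' \<otimes> r) \<otimes>\<^bsub>A\<^esub> z"
      using that tr(1,2) Tc fc fm by (simp add: A.m_assoc)
    also have "\<dots> = f r' \<otimes>\<^bsub>A\<^esub> (f t \<otimes>\<^bsub>A\<^esub> z)"
      unfolding tr(3) using that tr(1,2) t(1) Tc fc fm by (simp add: A.m_assoc)
    also have "\<dots> = \<zero>\<^bsub>A\<^esub>" using t tr fc by simp
    finally show ?thesis unfolding P_def using tr by blast
  qed
  have P_add: "P (z1 \<oplus>\<^bsub>A\<^esub> z2)" if "z1 \<in> carrier A" "z2 \<in> carrier A" "P z1" "P z2" for z1 z2
  proof -
    from that(3) obtain t1 where t1: "t1 \<in> T" "f t1 \<otimes>\<^bsub>A\<^esub> z1 = \<zero>\<^bsub>A\<^esub>" unfolding P_def by blast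
    from that(4) obtain t2 where t2: "t2 \<in> T" "f t2 \<otimes>\<^bsub>A\<^esub> z2 = \<zero>\<^bsub>A\<^esub>" unfolding P_def by blast
    from TOre[OF Tc[OF t1(1)] t2(1)] obtain s u where su: "s \<in> T" "u \<in> carrier R" "s \<otimes> t1 = u \<otimes> t2" by blast
    have e1: "f (s \<otimes> t1) \<otimes>\<^bsub>A\<^esub> z1 = \<zero>\<^bsub>A\<^esub>"
      using that su(1,2) t1 Tc fc fm by (simp add: A.m_assoc)
    have e2: "f (s \<otimes> t1) \<otimes>\<^bsub>A\<^esub> z2 = \<zero>\<^bsub>A\<^esub>"
      unfolding su(3) using that su(1,2) t2 Tc fc fm by (simp add: A.m_assoc)
    have "f (s \<otimes> t1) \<otimes>\<^bsub>A\<^esub> (z1 \<oplus>\<^bsub>A\<^esub> z2)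
        = f (s \<otimes> t1) \<otimes>\<^bsub>A\<^esub> z1 \<oplus>\<^bsub>A\<^esub> f (s \<otimes> t1) \<otimes>\<^bsub>A\<^esub> z2"
      using that su(1,2) t1(1) Tc fc T(3) by (simp add: A.r_distr)
    also have "\<dots> = \<zero>\<^bsub>A\<^esub>" unfolding e1 e2 by simp
    finally show ?thesis unfolding P_def using su t1 T(3) by blast
  qed
  have P_right: "P (z \<otimes>\<^bsub>A\<^esub> y)" if "z \<in> carrier A" "y \<in> carrier A" "P z" for z y
  proof -
    from that(3) obtain t where t: "t \<in> T" "f t \<otimes>\<^bsub>A\<^esub> z = \<zero>\<^bsub>A\<^esub>" unfolding P_def by blast
    have "f t \<otimes>\<^bsub>A\<^esub> (z \<otimes>\<^bsub>A\<^esub> y) = \<zero>\<^bsub>A\<^esub>"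
      using t that Tc fc by (simp add: A.m_assoc[symmetric])
    then show ?thesis unfolding P_def using t by blast
  qed
  have P_zero: "P \<zero>\<^bsub>A\<^esub>" unfolding P_def using T(2) fc[of \<one>] by (auto intro!: bexI[of _ \<one>])
  have P_neg: "P (\<ominus>\<^bsub>A\<^esub> z)" if "z \<in> carrier A" "P z" for z
  proof -
    from that(2) obtain t where t: "t \<in> T" "f t \<otimes>\<^bsub>A\<^esub> z = \<zero>\<^bsub>A\<^esub>" unfolding P_def by blast
    have "f t \<otimes>\<^bsub>A\<^esub> (\<ominus>\<^bsub>A\<^esub> z) = \<zero>\<^bsub>A\<^esub>"
      using t that Tc fc by (simp add: A.r_minus)
    then show ?thesis unfolding P_def using t by blast
  qed
  define M where "M = {x \<in> carrier A. \<exists>c\<in>C. P (f c \<otimes>\<^bsub>A\<^esub> x)}"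
  have M1: "x \<in> M" if "x \<in> carrier A" "P x" for x
    unfolding M_def using that C(2) f1 by (auto intro!: bexI[of _ \<one>])
  have idl: "ideal M A"
  proof (rule ring_ideal_intro)
    show "ring A" by (rule A.ring_axioms)
    show "M \<subseteq> carrier A" unfolding M_def by blast
    show "\<zero>\<^bsub>A\<^esub> \<in> M" using M1 P_zero by simp
    show "a \<oplus>\<^bsub>A\<^esub> b \<in> M" if "a \<in> M" "b \<in> M" for a b
    proof -
      from that obtain c1 c2 where c: "a \<in> carrier A" "b \<in> carrier A" "c1 \<in> C" "c2 \<in> C"
        "P (f c1 \<otimes>\<^bsub>A\<^esub> a)" "P (f c2 \<otimes>\<^bsub>A\<^esub> b)" unfolding M_def by blast
      from COre[OF Cc[OF c(3)] c(4)] obtain c' r' where cr: "c' \<in> C" "r' \<in> carrier R" "c' \<otimes> c1 = r' \<otimes> c2" by blast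
      have eq: "f (c' \<otimes> c1) \<otimes>\<^bsub>A\<^esub> (a \<oplus>\<^bsub>A\<^esub> b)
          = f c' \<otimes>\<^bsub>A\<^esub> (f c1 \<otimes>\<^bsub>A\<^esub> a) \<oplus>\<^bsub>A\<^esub> f r' \<otimes>\<^bsub>A\<^esub> (f c2 \<otimes>\<^bsub>A\<^esub> b)"
      proof -
        have "f (c' \<otimes> c1) \<otimes>\<^bsub>A\<^esub> (a \<oplus>\<^bsub>A\<^esub> b) = f (c' \<otimes> c1) \<otimes>\<^bsub>A\<^esub> a \<oplus>\<^bsub>A\<^esub> f (c' \<otimes> c1) \<otimes>\<^bsub>A\<^esub> b"
          using c(1-4) cr(1,2) Cc fc C(3) by (simp add: A.r_distr)
        also have "\<dots> = f (c' \<otimes> c1) \<otimes>\<^bsub>A\<^esub> a \<oplus>\<^bsub>A\<^esub> f (r' \<otimes> c2) \<otimes>\<^bsub>A\<^esub> b"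
          unfolding cr(3) ..
        also have "\<dots> = f c' \<otimes>\<^bsub>A\<^esub> (f c1 \<otimes>\<^bsub>A\<^esub> a) \<oplus>\<^bsub>A\<^esub> f r' \<otimes>\<^bsub>A\<^esub> (f c2 \<otimes>\<^bsub>A\<^esub> b)"
          using c(1-4) cr(1,2) Cc fc fm by (simp add: A.m_assoc)
        finally show ?thesis .
      qed
      have "P (f (c' \<otimes> c1) \<otimes>\<^bsub>A\<^esub> (a \<oplus>\<^bsub>A\<^esub> b))"
        unfolding eq
      proof (rule P_add)
        show "P (f c' \<otimes>\<^bsub>A\<^esub> (f c1 \<otimes>\<^bsub>A\<^esub> a))" by (rule P_left) (use c cr Cc fc in auto)
        show "P (f r' \<otimes>\<^bsub>A\<^esub> (f c2 \<otimes>\<^bsub>A\<^esub> b))" by (rule P_left) (use c cr Cc fc in auto)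
      qed (use c cr Cc fc in auto)
      then show ?thesis unfolding M_def using c(1,2,3) cr(1) C(3) by blast
    qed
    show "\<ominus>\<^bsub>A\<^esub> a \<in> M" if "a \<in> M" for a
    proof -
      from that obtain c where c: "a \<in> carrier A" "c \<in> C" "P (f c \<otimes>\<^bsub>A\<^esub> a)" unfolding M_def by blast
      have "f c \<otimes>\<^bsub>A\<^esub> (\<ominus>\<^bsub>A\<^esub> a) = \<ominus>\<^bsub>A\<^esub> (f c \<otimes>\<^bsub>A\<^esub> a)" using c Cc fc by (simp add: A.r_minus)
      then have "P (f c \<otimes>\<^bsub>A\<^esub> (\<ominus>\<^bsub>A\<^esub> a))" using P_neg c Cc fc by simp
      then show ?thesis unfolding M_def using c by auto
    qed
    show "x \<otimes>\<^bsub>A\<^esub> a \<in> M" if "a \<in> M" "x \<in> carrier A" for a x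
    proof -
      from that obtain c where c: "a \<in> carrier A" "c \<in> C" "P (f c \<otimes>\<^bsub>A\<^esub> a)" unfolding M_def by blast
      have u: "f c \<in> Units A" using C(4) c by blast
      have "x \<otimes>\<^bsub>A\<^esub> inv\<^bsub>A\<^esub> (f c) \<in> carrier A" using u that by auto
      from rep[OF this] obtain c' r' where cr: "c' \<in> C" "r' \<in> carrier R"
        "x \<otimes>\<^bsub>A\<^esub> inv\<^bsub>A\<^esub> (f c) = inv\<^bsub>A\<^esub> (f c') \<otimes>\<^bsub>A\<^esub> f r'" by blast
      have u': "f c' \<in> Units A" using C(4) cr by blast
      have "f c' \<otimes>\<^bsub>A\<^esub> (x \<otimes>\<^bsub>A\<^esub> a) = f c' \<otimes>\<^bsub>A\<^esub> ((x \<otimes>\<^bsub>A\<^esub> inv\<^bsub>A\<^esub> (f c)) \<otimes>\<^bsub>A\<^esub> (f c \<otimes>\<^bsub>A\<^esub> a))"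
      proof -
        have "inv\<^bsub>A\<^esub> (f c) \<otimes>\<^bsub>A\<^esub> (f c \<otimes>\<^bsub>A\<^esub> a) = a"
          using u c(1) by (simp add: A.m_assoc[symmetric] A.Units_closed)
        then show ?thesis using u c(1) that(2) by (simp add: A.m_assoc A.Units_closed)
      qed
      also have "\<dots> = f c' \<otimes>\<^bsub>A\<^esub> (inv\<^bsub>A\<^esub> (f c') \<otimes>\<^bsub>A\<^esub> (f r' \<otimes>\<^bsub>A\<^esub> (f c \<otimes>\<^bsub>A\<^esub> a)))"
        unfolding cr(3) using u u' c(1,2) cr(1,2) fc Cc by (simp add: A.m_assoc A.Units_closed)
      also have "\<dots> = f r' \<otimes>\<^bsub>A\<^esub> (f c \<otimes>\<^bsub>A\<^esub> a)"
      proof -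
        have "f r' \<otimes>\<^bsub>A\<^esub> (f c \<otimes>\<^bsub>A\<^esub> a) \<in> carrier A" using c(1,2) cr(2) Cc fc by auto
        then show ?thesis using u' by (simp add: A.m_assoc[symmetric] A.Units_closed)
      qed
      finally have eq: "f c' \<otimes>\<^bsub>A\<^esub> (x \<otimes>\<^bsub>A\<^esub> a) = f r' \<otimes>\<^bsub>A\<^esub> (f c \<otimes>\<^bsub>A\<^esub> a)" .
      have "P (f r' \<otimes>\<^bsub>A\<^esub> (f c \<otimes>\<^bsub>A\<^esub> a))" by (rule P_left) (use c cr(2) Cc fc in auto)
      then have "P (f c' \<otimes>\<^bsub>A\<^esub> (x \<otimes>\<^bsub>A\<^esub> a))" by (simp only: eq)
      then show ?thesis unfolding M_def using cr(1) that(2) c(1) by blast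
    qed
    show "a \<otimes>\<^bsub>A\<^esub> x \<in> M" if "a \<in> M" "x \<in> carrier A" for a x
    proof -
      from that obtain c where c: "a \<in> carrier A" "c \<in> C" "P (f c \<otimes>\<^bsub>A\<^esub> a)" unfolding M_def by blast
      have "P ((f c \<otimes>\<^bsub>A\<^esub> a) \<otimes>\<^bsub>A\<^esub> x)" using P_right c that Cc fc by simp
      then have "P (f c \<otimes>\<^bsub>A\<^esub> (a \<otimes>\<^bsub>A\<^esub> x))" using c that Cc fc by (simp add: A.m_assoc)
      then show ?thesis unfolding M_def using c that by auto
    qed
  qed
  then have "M = {\<zero>\<^bsub>A\<^esub>} \<or> M = carrier A" using simple unfolding simple_ring_def by blast
  then show ?thesis
  proof
    assume M0: "M = {\<zero>\<^bsub>A\<^esub>}"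
    have "f t \<in> Units A" if t: "t \<in> T" for t
    proof (rule art_regular_unit[OF art])
      show "f t \<in> carrier A" using t Tc fc by blast
      show "x = \<zero>\<^bsub>A\<^esub>" if "x \<in> carrier A" "f t \<otimes>\<^bsub>A\<^esub> x = \<zero>\<^bsub>A\<^esub>" for x
      proof -
        have "P x" unfolding P_def using t that by blast
        then have "x \<in> M" using M1 that by blast
        then show ?thesis using M0 by blast
      qed
      show "x = \<zero>\<^bsub>A\<^esub>" if x: "x \<in> carrier A" "x \<otimes>\<^bsub>A\<^esub> f t = \<zero>\<^bsub>A\<^esub>" for x
      proof -
        from rep[OF x(1)] obtain c r where cr: "c \<in> C" "r \<in> carrier R" "x = inv\<^bsub>A\<^esub> (f c) \<otimes>\<^bsub>A\<^esub> f r" by blast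
        have u: "f c \<in> Units A" using C(4) cr(1) by blast
        have frc: "f r \<in> carrier A" using fc cr(2) by blast
        have ftc: "f t \<in> carrier A" using fc Tc t by blast
        have fr: "f r = f c \<otimes>\<^bsub>A\<^esub> x"
        proof -
          have "f c \<otimes>\<^bsub>A\<^esub> x = f c \<otimes>\<^bsub>A\<^esub> (inv\<^bsub>A\<^esub> (f c) \<otimes>\<^bsub>A\<^esub> f r)" by (subst cr(3)) (rule refl)
          also have "\<dots> = f r" using u frc by (simp add: A.m_assoc[symmetric] A.Units_closed)
          finally show ?thesis by (rule sym)
        qed
        have "f r \<otimes>\<^bsub>A\<^esub> f t = f c \<otimes>\<^bsub>A\<^esub> (x \<otimes>\<^bsub>A\<^esub> f t)"
          unfolding fr using x(1) u ftc by (simp add: A.m_assoc A.Units_closed)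
        also have "\<dots> = \<zero>\<^bsub>A\<^esub>" unfolding x(2) using u by (simp add: A.Units_closed)
        finally have frt: "f r \<otimes>\<^bsub>A\<^esub> f t = \<zero>\<^bsub>A\<^esub>" .
        from H[OF cr(2) t frt] obtain t' v where tv: "t' \<in> T" "v \<in> carrier R" "f v \<in> Units A"
          "f t' \<otimes>\<^bsub>A\<^esub> (f v \<otimes>\<^bsub>A\<^esub> f r) = \<zero>\<^bsub>A\<^esub>" by blast
        have "P (f v \<otimes>\<^bsub>A\<^esub> f r)" unfolding P_def using tv(1,4) by blast
        moreover have "f v \<otimes>\<^bsub>A\<^esub> f r \<in> carrier A" using tv(2) frc fc by blast
        ultimately have "f v \<otimes>\<^bsub>A\<^esub> f r \<in> M" by (rule M1[rotated])
        then have z: "f v \<otimes>\<^bsub>A\<^esub> f r = \<zero>\<^bsub>A\<^esub>" using M0 by blast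
        have "f r = inv\<^bsub>A\<^esub> (f v) \<otimes>\<^bsub>A\<^esub> (f v \<otimes>\<^bsub>A\<^esub> f r)"
          using tv(3) frc by (simp add: A.m_assoc[symmetric] A.Units_closed)
        also have "\<dots> = \<zero>\<^bsub>A\<^esub>" unfolding z using tv(3) by (simp add: A.Units_closed)
        finally have fr0: "f r = \<zero>\<^bsub>A\<^esub>" .
        show ?thesis unfolding cr(3) fr0 using u by (simp add: A.Units_closed)
      qed
    qed
    then show ?thesis by blast
  next
    assume "M = carrier A"
    then have "\<one>\<^bsub>A\<^esub> \<in> M" by simp
    then obtain c where c0: "c \<in> C" "P (f c \<otimes>\<^bsub>A\<^esub> \<one>\<^bsub>A\<^esub>)" unfolding M_def by blast
    then have c: "c \<in> C" "P (f c)" using Cc fc by auto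
    then obtain t where t: "t \<in> T" "f t \<otimes>\<^bsub>A\<^esub> f c = \<zero>\<^bsub>A\<^esub>" unfolding P_def by blast
    have u: "f c \<in> Units A" using C(4) c by blast
    have "f t = (f t \<otimes>\<^bsub>A\<^esub> f c) \<otimes>\<^bsub>A\<^esub> inv\<^bsub>A\<^esub> (f c)"
      using u t(1) Tc fc by (simp add: A.m_assoc A.Units_closed)
    also have "\<dots> = \<zero>\<^bsub>A\<^esub>" unfolding t(2) using u by (simp add: A.Units_closed)
    finally have "f t = \<zero>\<^bsub>A\<^esub>" .
    then show ?thesis using t by blast
  qed
qed


lemma zero_product:
  fixes R (structure) and A :: "nat \<Rightarrow> ('c, 'k) ring_scheme"
  assumes fin: "finite J" and ringR: "ring R"
    and T: "T \<subseteq> carrier R" "\<one> \<in> T" "\<And>a b. a \<in> T \<Longrightarrow> b \<in> T \<Longrightarrow> a \<otimes> b \<in> T"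
    and hom: "\<And>j. j \<in> J \<Longrightarrow> ring (A j) \<and> g j \<in> ring_hom R (A j)"
    and z: "\<And>j. j \<in> J \<Longrightarrow> \<exists>t\<in>T. g j t = \<zero>\<^bsub>A j\<^esub>"
  shows "\<exists>t\<in>T. \<forall>j\<in>J. g j t = \<zero>\<^bsub>A j\<^esub>"
  using fin hom z
proof (induction J rule: finite_induct)
  case empty
  then show ?case using T(2) by blast
next
  case (insert j J)
  have "\<exists>t\<in>T. \<forall>j\<in>J. g j t = \<zero>\<^bsub>A j\<^esub>"
  proof (rule insert.IH)
    show "ring (A k) \<and> g k \<in> ring_hom R (A k)" if "k \<in> J" for k using insert.prems(1)[of k] that by simp
    show "\<exists>t\<in>T. g k t = \<zero>\<^bsub>A k\<^esub>" if "k \<in> J" for k using insert.prems(2)[of k] that by simp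
  qed
  then obtain t where t: "t \<in> T" "\<forall>k\<in>J. g k t = \<zero>\<^bsub>A k\<^esub>" by blast
  from insert.prems(2)[of j, simplified] obtain s where s: "s \<in> T" "g j s = \<zero>\<^bsub>A j\<^esub>" by blast
  have tc: "t \<in> carrier R" "s \<in> carrier R" using t s T(1) by auto
  have "g k (t \<otimes> s) = \<zero>\<^bsub>A k\<^esub>" if k: "k \<in> insert j J" for k
  proof -
    have rk: "ring (A k)" and hk: "g k \<in> ring_hom R (A k)" using insert.prems(1)[OF k] by auto
    have eq: "g k (t \<otimes> s) = g k t \<otimes>\<^bsub>A k\<^esub> g k s" using ring_hom_mult[OF hk tc] .
    have c: "g k t \<in> carrier (A k)" "g k s \<in> carrier (A k)" using ring_hom_closed[OF hk] tc by auto
    interpret Ak: ring "A k" by (rule rk)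
    show ?thesis
    proof (cases "k = j")
      case True
      then have "g k s = \<zero>\<^bsub>A k\<^esub>" using s(2) by simp
      then show ?thesis unfolding eq using c by simp
    next
      case False
      then have "k \<in> J" using k by simp
      then have "g k t = \<zero>\<^bsub>A k\<^esub>" using t(2) by simp
      then show ?thesis unfolding eq using c by simp
    qed
  qed
  then show ?case using t(1) s(1) T(3) by blast
qed

lemma maxDen_char:
  fixes XX :: "('a, 'm) ring_scheme" and D :: "nat \<Rightarrow> 'a set" and Ix :: "nat set"
  assumes den: "\<And>i. i \<in> Ix \<Longrightarrow> left_den_set XX (D i)"
    and cover: "\<And>T. left_den_set XX T \<Longrightarrow> \<exists>i\<in>Ix. T \<subseteq> D i"
    and dist: "\<And>i j. i \<in> Ix \<Longrightarrow> j \<in> Ix \<Longrightarrow> D i \<subseteq> D j \<Longrightarrow> i = j"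
  shows "maxDen_l XX = D ` Ix"
proof
  show "maxDen_l XX \<subseteq> D ` Ix"
  proof
    fix T assume "T \<in> maxDen_l XX"
    then have T: "left_den_set XX T" "\<And>U. left_den_set XX U \<Longrightarrow> T \<subseteq> U \<Longrightarrow> U = T"
      unfolding maxDen_l_def by auto
    from cover[OF T(1)] obtain i where i: "i \<in> Ix" "T \<subseteq> D i" by blast
    have "D i = T" using T(2)[OF den[OF i(1)] i(2)] .
    then show "T \<in> D ` Ix" using i(1) by blast
  qed
  show "D ` Ix \<subseteq> maxDen_l XX"
  proof
    fix U assume "U \<in> D ` Ix"
    then obtain i where i: "i \<in> Ix" "U = D i" by blast
    have "T = D i" if "left_den_set XX T" "D i \<subseteq> T" for T
    proof -
      from cover[OF that(1)] obtain j where j: "j \<in> Ix" "T \<subseteq> D j" by blast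
      then have "i = j" using dist[OF i(1) j(1)] that(2) by blast
      then show ?thesis using j that(2) by blast
    qed
    then show "U \<in> maxDen_l XX" unfolding maxDen_l_def using den[OF i(1)] i(2) by blast
  qed
qed

lemma zero_not_unit:
  fixes A (structure)
  assumes "ring A" "\<one> \<noteq> \<zero>"
  shows "\<zero> \<notin> Units A"
proof
  interpret ring A by fact
  assume "\<zero> \<in> Units A"
  then obtain y where "y \<in> carrier A" "\<zero> \<otimes> y = \<one>" unfolding Units_def by blast
  then show False using assms(2) by simp
qed

lemma hom_unit:
  fixes A (structure) and B (structure)
  assumes "ring A" "ring B" "h \<in> ring_hom A B" "u \<in> Units A"
  shows "h u \<in> Units B" "h (inv\<^bsub>A\<^esub> u) = inv\<^bsub>B\<^esub> (h u)"
proof -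
  interpret A: ring A by fact
  interpret B: ring B by fact
  have c: "u \<in> carrier A" "inv\<^bsub>A\<^esub> u \<in> carrier A" using assms(4) by auto
  have 1: "h u \<otimes>\<^bsub>B\<^esub> h (inv\<^bsub>A\<^esub> u) = \<one>\<^bsub>B\<^esub>"
  proof -
    have "h u \<otimes>\<^bsub>B\<^esub> h (inv\<^bsub>A\<^esub> u) = h (u \<otimes>\<^bsub>A\<^esub> inv\<^bsub>A\<^esub> u)" using ring_hom_mult[OF assms(3) c] by (rule sym)
    also have "u \<otimes>\<^bsub>A\<^esub> inv\<^bsub>A\<^esub> u = \<one>\<^bsub>A\<^esub>" using assms(4) by simp
    finally show ?thesis using ring_hom_one[OF assms(3)] by simp
  qed
  have 2: "h (inv\<^bsub>A\<^esub> u) \<otimes>\<^bsub>B\<^esub> h u = \<one>\<^bsub>B\<^esub>"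
  proof -
    have "h (inv\<^bsub>A\<^esub> u) \<otimes>\<^bsub>B\<^esub> h u = h (inv\<^bsub>A\<^esub> u \<otimes>\<^bsub>A\<^esub> u)" using ring_hom_mult[OF assms(3) c(2) c(1)] by (rule sym)
    also have "inv\<^bsub>A\<^esub> u \<otimes>\<^bsub>A\<^esub> u = \<one>\<^bsub>A\<^esub>" using assms(4) by simp
    finally show ?thesis using ring_hom_one[OF assms(3)] by simp
  qed
  have cc: "h u \<in> carrier B" "h (inv\<^bsub>A\<^esub> u) \<in> carrier B" using ring_hom_closed[OF assms(3)] c by auto
  show "h u \<in> Units B" using 1 2 cc unfolding Units_def by blast
  show "h (inv\<^bsub>A\<^esub> u) = inv\<^bsub>B\<^esub> (h u)" using B.inv_unique'[OF cc 1 2] .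
qed

lemma mmg_sub:
  assumes "M \<subseteq> carrier Q" "\<one>\<^bsub>Q\<^esub> \<in> M" "Y \<subseteq> M" "\<And>a b. a \<in> M \<Longrightarrow> b \<in> M \<Longrightarrow> a \<otimes>\<^bsub>Q\<^esub> b \<in> M"
  shows "mult_monoid_gen Q Y \<subseteq> M"
  unfolding mult_monoid_gen_def by (rule Inter_lower) (use assms in simp)

lemma mmg_mem:
  assumes "\<And>M. M \<subseteq> carrier Q \<Longrightarrow> \<one>\<^bsub>Q\<^esub> \<in> M \<Longrightarrow> Y \<subseteq> M \<Longrightarrow> (\<forall>a\<in>M. \<forall>b\<in>M. a \<otimes>\<^bsub>Q\<^esub> b \<in> M) \<Longrightarrow> x \<in> M"
  shows "x \<in> mult_monoid_gen Q Y"
  unfolding mult_monoid_gen_def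
proof (rule InterI)
  fix M assume "M \<in> {M. M \<subseteq> carrier Q \<and> \<one>\<^bsub>Q\<^esub> \<in> M \<and> Y \<subseteq> M \<and> (\<forall>a\<in>M. \<forall>b\<in>M. a \<otimes>\<^bsub>Q\<^esub> b \<in> M)}"
  then show "x \<in> M" using assms by simp
qed

lemma rg_simps:
  fixes A (structure)
  assumes "ring A"
  shows "\<And>x. x \<in> carrier A \<Longrightarrow> x \<otimes> \<one> = x"
    and "\<And>x. x \<in> carrier A \<Longrightarrow> \<one> \<otimes> x = x"
    and "\<And>x. x \<in> carrier A \<Longrightarrow> x \<otimes> \<zero> = \<zero>"
    and "\<And>x. x \<in> carrier A \<Longrightarrow> \<zero> \<otimes> x = \<zero>"
    and "\<one> \<in> carrier A" and "\<zero> \<in> carrier A"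
proof -
  interpret ring A by fact
  show "\<And>x. x \<in> carrier A \<Longrightarrow> x \<otimes> \<one> = x" "\<And>x. x \<in> carrier A \<Longrightarrow> \<one> \<otimes> x = x"
    "\<And>x. x \<in> carrier A \<Longrightarrow> x \<otimes> \<zero> = \<zero>" "\<And>x. x \<in> carrier A \<Longrightarrow> \<zero> \<otimes> x = \<zero>"
    "\<one> \<in> carrier A" "\<zero> \<in> carrier A" by auto
qed

lemma rg_one_unit:
  fixes A (structure)
  assumes "ring A"
  shows "\<one> \<in> Units A"
proof -
  interpret ring A by fact
  show ?thesis by simp
qed


theorem corollary3p13:
  fixes R :: "('a, 'm) ring_scheme"
    and Q :: "('b, 'n) ring_scheme"
    and \<sigma> :: "'a \<Rightarrow> 'b"
    and n :: nat
    and Qs :: "nat \<Rightarrow> ('c, 'k) ring_scheme"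
    and \<pi> :: "nat \<Rightarrow> 'b \<Rightarrow> 'c"
  assumes R: "ring R" "semiprime_ring R" "left_Goldie R"
    and Qcl: "is_left_localization R (regular_elems R) Q \<sigma>"
    and Qs_sa: "\<forall>i\<in>{1..n}. simple_Artinian (Qs i)"
    and proj: "\<forall>i\<in>{1..n}. \<pi> i \<in> ring_hom Q (Qs i)"
    and prod: "bij_betw (\<lambda>q. \<lambda>i\<in>{1..n}. \<pi> i q) (carrier Q) (PiE {1..n} (\<lambda>i. carrier (Qs i)))"
  defines "S' \<equiv> (\<lambda>i. {q \<in> carrier Q. \<pi> i q \<in> Units (Qs i)})"
    and "S \<equiv> (\<lambda>i. {r \<in> carrier R. \<sigma> r \<in> carrier Q \<and> \<pi> i (\<sigma> r) \<in> Units (Qs i)})"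
  shows "(\<forall>T\<in>maxDen_l R. regular_elems R \<subseteq> T)
    \<and> maxDen_l R = S ` {1..n}
    \<and> maxDen_l Q = S' ` {1..n}
    \<and> bij_betw (tilde_set R Q \<sigma>) (maxDen_l R) (maxDen_l Q)
    \<and> (\<forall>T\<in>maxDen_l R. {r \<in> carrier R. \<sigma> r \<in> tilde_set R Q \<sigma> T} = T)
    \<and> (\<forall>U\<in>maxDen_l Q. tilde_set R Q \<sigma> {r \<in> carrier R. \<sigma> r \<in> U} = U)
    \<and> (\<forall>i\<in>{1..n}. \<exists>\<phi>. is_left_localization R (S i) (Qs i) \<phi>)"
proof -
  define I where "I = {1..n}"
  define C where "C = regular_elems R"
  interpret R: ring R by (rule R(1))
  have ringQ: "ring Q" using Qcl unfolding is_left_localization_def by blast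
  interpret Q: ring Q by (rule ringQ)
  have sh: "\<sigma> \<in> ring_hom R Q" using Qcl unfolding is_left_localization_def by blast
  have Cden: "left_den_set R C" using Qcl unfolding is_left_localization_def C_def by blast
  have Cunit: "\<And>s. s \<in> C \<Longrightarrow> \<sigma> s \<in> Units Q" using Qcl unfolding is_left_localization_def C_def by blast
  have qrep: "\<And>q. q \<in> carrier Q \<Longrightarrow> \<exists>s\<in>C. \<exists>r\<in>carrier R. q = inv\<^bsub>Q\<^esub> (\<sigma> s) \<otimes>\<^bsub>Q\<^esub> \<sigma> r"
    using Qcl unfolding is_left_localization_def C_def by blast
  have ker: "\<And>r. r \<in> carrier R \<Longrightarrow> \<sigma> r = \<zero>\<^bsub>Q\<^esub> \<Longrightarrow> \<exists>s\<in>C. s \<otimes>\<^bsub>R\<^esub> r = \<zero>\<^bsub>R\<^esub>"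
    using Qcl unfolding is_left_localization_def C_def by blast
  have Cms: "mult_subset R C" using Cden unfolding left_den_set_def left_Ore_set_def by blast
  have Cc: "\<And>c. c \<in> C \<Longrightarrow> c \<in> carrier R" using Cms unfolding mult_subset_def by blast
  have C1: "\<one>\<^bsub>R\<^esub> \<in> C" using Cms unfolding mult_subset_def by blast
  have Cm: "\<And>a b. a \<in> C \<Longrightarrow> b \<in> C \<Longrightarrow> a \<otimes>\<^bsub>R\<^esub> b \<in> C" using Cms unfolding mult_subset_def by blast
  have COre: "\<And>r c. r \<in> carrier R \<Longrightarrow> c \<in> C \<Longrightarrow> \<exists>c'\<in>C. \<exists>r'\<in>carrier R. c' \<otimes>\<^bsub>R\<^esub> r = r' \<otimes>\<^bsub>R\<^esub> c"
    using Cden unfolding left_den_set_def left_Ore_set_def by blast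
  interpret sig: ring_hom_ring R Q \<sigma> using ring_hom_ringI2[OF R(1) ringQ sh] .
  have sc: "\<And>r. r \<in> carrier R \<Longrightarrow> \<sigma> r \<in> carrier Q" using ring_hom_closed[OF sh] .
  have sm: "\<And>x y. x \<in> carrier R \<Longrightarrow> y \<in> carrier R \<Longrightarrow> \<sigma> (x \<otimes>\<^bsub>R\<^esub> y) = \<sigma> x \<otimes>\<^bsub>Q\<^esub> \<sigma> y"
    using ring_hom_mult[OF sh] .
  have s1: "\<sigma> \<one>\<^bsub>R\<^esub> = \<one>\<^bsub>Q\<^esub>" using ring_hom_one[OF sh] .
  have s0: "\<sigma> \<zero>\<^bsub>R\<^esub> = \<zero>\<^bsub>Q\<^esub>" by simp
  have sinj0: "\<And>r. r \<in> carrier R \<Longrightarrow> \<sigma> r = \<zero>\<^bsub>Q\<^esub> \<Longrightarrow> r = \<zero>\<^bsub>R\<^esub>"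
  proof -
    fix r assume r: "r \<in> carrier R" "\<sigma> r = \<zero>\<^bsub>Q\<^esub>"
    from ker[OF r] obtain s where s: "s \<in> C" "s \<otimes>\<^bsub>R\<^esub> r = \<zero>\<^bsub>R\<^esub>" by blast
    then show "r = \<zero>\<^bsub>R\<^esub>" using r(1) unfolding C_def regular_elems_def by blast
  qed
  have sinj: "\<And>x y. x \<in> carrier R \<Longrightarrow> y \<in> carrier R \<Longrightarrow> \<sigma> x = \<sigma> y \<Longrightarrow> x = y"
  proof -
    fix x y assume xy: "x \<in> carrier R" "y \<in> carrier R" "\<sigma> x = \<sigma> y"
    have "\<sigma> (x \<ominus>\<^bsub>R\<^esub> y) = \<sigma> x \<ominus>\<^bsub>Q\<^esub> \<sigma> y"
      using xy(1,2) by (simp add: R.minus_eq Q.minus_eq)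
    also have "\<dots> = \<zero>\<^bsub>Q\<^esub>" unfolding xy(3) using xy(2) sc by simp
    finally have "x \<ominus>\<^bsub>R\<^esub> y = \<zero>\<^bsub>R\<^esub>" using sinj0 xy(1,2) by simp
    then show "x = y" using xy(1,2) by simp
  qed
  have ringQs: "\<And>i. i \<in> I \<Longrightarrow> ring (Qs i)" using Qs_sa unfolding I_def simple_Artinian_def simple_ring_def by blast
  have nzQs: "\<And>i. i \<in> I \<Longrightarrow> \<one>\<^bsub>Qs i\<^esub> \<noteq> \<zero>\<^bsub>Qs i\<^esub>" using Qs_sa unfolding I_def simple_Artinian_def simple_ring_def by blast
  have saQs: "\<And>i. i \<in> I \<Longrightarrow> simple_Artinian (Qs i)" using Qs_sa unfolding I_def by blast
  have ph: "\<And>i. i \<in> I \<Longrightarrow> \<pi> i \<in> ring_hom Q (Qs i)" using proj unfolding I_def by blast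
  have pc: "\<And>i q. i \<in> I \<Longrightarrow> q \<in> carrier Q \<Longrightarrow> \<pi> i q \<in> carrier (Qs i)" using ring_hom_closed[OF ph] .
  have pm: "\<And>i x y. i \<in> I \<Longrightarrow> x \<in> carrier Q \<Longrightarrow> y \<in> carrier Q \<Longrightarrow> \<pi> i (x \<otimes>\<^bsub>Q\<^esub> y) = \<pi> i x \<otimes>\<^bsub>Qs i\<^esub> \<pi> i y"
    using ring_hom_mult[OF ph] .
  have p1: "\<And>i. i \<in> I \<Longrightarrow> \<pi> i \<one>\<^bsub>Q\<^esub> = \<one>\<^bsub>Qs i\<^esub>" using ring_hom_one[OF ph] .
  have p0: "\<And>i. i \<in> I \<Longrightarrow> \<pi> i \<zero>\<^bsub>Q\<^esub> = \<zero>\<^bsub>Qs i\<^esub>" using ring_hom_zero[OF ph ringQ ringQs] .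
  have z_nu: "\<And>i. i \<in> I \<Longrightarrow> \<zero>\<^bsub>Qs i\<^esub> \<notin> Units (Qs i)" using zero_not_unit[OF ringQs nzQs] .
  have pinj: "\<And>x y. x \<in> carrier Q \<Longrightarrow> y \<in> carrier Q \<Longrightarrow> (\<And>i. i \<in> I \<Longrightarrow> \<pi> i x = \<pi> i y) \<Longrightarrow> x = y"
  proof -
    fix x y assume xy: "x \<in> carrier Q" "y \<in> carrier Q" "\<And>i. i \<in> I \<Longrightarrow> \<pi> i x = \<pi> i y"
    have "(\<lambda>i\<in>{1..n}. \<pi> i x) = (\<lambda>i\<in>{1..n}. \<pi> i y)" using xy(3) unfolding I_def by auto
    then show "x = y" using prod xy(1,2) unfolding bij_betw_def inj_on_def by blast
  qed
  have psurj: "\<And>g. (\<And>i. i \<in> I \<Longrightarrow> g i \<in> carrier (Qs i)) \<Longrightarrow> \<exists>q\<in>carrier Q. \<forall>i\<in>I. \<pi> i q = g i"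
  proof -
    fix g assume g: "\<And>i. i \<in> I \<Longrightarrow> g i \<in> carrier (Qs i)"
    have "restrict g {1..n} \<in> PiE {1..n} (\<lambda>i. carrier (Qs i))" using g unfolding I_def by auto
    then obtain q where q: "q \<in> carrier Q" "(\<lambda>i\<in>{1..n}. \<pi> i q) = restrict g {1..n}"
      using prod unfolding bij_betw_def by (metis (no_types, lifting) imageE)
    have "\<pi> i q = g i" if "i \<in> I" for i
    proof -
      have "(\<lambda>i\<in>{1..n}. \<pi> i q) i = restrict g {1..n} i" using q(2) by simp
      then show ?thesis using that unfolding I_def by simp
    qed
    then show "\<exists>q\<in>carrier Q. \<forall>i\<in>I. \<pi> i q = g i" using q(1) by blast
  qed
  have single: "\<And>i a. i \<in> I \<Longrightarrow> a \<in> carrier (Qs i) \<Longrightarrow>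
      \<exists>q\<in>carrier Q. \<pi> i q = a \<and> (\<forall>j\<in>I. j \<noteq> i \<longrightarrow> \<pi> j q = \<zero>\<^bsub>Qs j\<^esub>)"
  proof -
    fix i a assume ia: "i \<in> I" "a \<in> carrier (Qs i)"
    have "\<exists>q\<in>carrier Q. \<forall>j\<in>I. \<pi> j q = (if j = i then a else \<zero>\<^bsub>Qs j\<^esub>)"
    proof (rule psurj)
      fix j assume "j \<in> I"
      then show "(if j = i then a else \<zero>\<^bsub>Qs j\<^esub>) \<in> carrier (Qs j)"
        using ia ringQs ring.ring_simprules(2) by fastforce
    qed
    then obtain q where q: "q \<in> carrier Q" "\<forall>j\<in>I. \<pi> j q = (if j = i then a else \<zero>\<^bsub>Qs j\<^esub>)" by blast
    then show "\<exists>q\<in>carrier Q. \<pi> i q = a \<and> (\<forall>j\<in>I. j \<noteq> i \<longrightarrow> \<pi> j q = \<zero>\<^bsub>Qs j\<^esub>)"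
      using ia(1) by (intro bexI[of _ q]) auto
  qed
  have punit: "\<And>i u. i \<in> I \<Longrightarrow> u \<in> Units Q \<Longrightarrow> \<pi> i u \<in> Units (Qs i)"
    using hom_unit(1)[OF ringQ ringQs ph] by blast
  have pinv: "\<And>i u. i \<in> I \<Longrightarrow> u \<in> Units Q \<Longrightarrow> \<pi> i (inv\<^bsub>Q\<^esub> u) = inv\<^bsub>Qs i\<^esub> (\<pi> i u)"
    using hom_unit(2)[OF ringQ ringQs ph] by blast
  have qrep2: "\<And>q. q \<in> carrier Q \<Longrightarrow> \<exists>d\<in>C. \<exists>u\<in>carrier R. \<sigma> u = \<sigma> d \<otimes>\<^bsub>Q\<^esub> q"
  proof -
    fix q assume q: "q \<in> carrier Q"
    from qrep[OF q] obtain s r where sr: "s \<in> C" "r \<in> carrier R" "q = inv\<^bsub>Q\<^esub> (\<sigma> s) \<otimes>\<^bsub>Q\<^esub> \<sigma> r" by blast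
    have u: "\<sigma> s \<in> Units Q" using Cunit sr(1) .
    have "\<sigma> s \<otimes>\<^bsub>Q\<^esub> q = \<sigma> s \<otimes>\<^bsub>Q\<^esub> (inv\<^bsub>Q\<^esub> (\<sigma> s) \<otimes>\<^bsub>Q\<^esub> \<sigma> r)" by (subst sr(3)) (rule refl)
    also have "\<dots> = \<sigma> r" using u sc[OF sr(2)] by (simp add: Q.m_assoc[symmetric] Q.Units_closed)
    finally show "\<exists>d\<in>C. \<exists>u\<in>carrier R. \<sigma> u = \<sigma> d \<otimes>\<^bsub>Q\<^esub> q" using sr(1,2) by metis
  qed
  have Wex: "\<And>i. i \<in> I \<Longrightarrow> \<exists>w\<in>carrier R. \<pi> i (\<sigma> w) \<in> Units (Qs i) \<and> (\<forall>j\<in>I. j \<noteq> i \<longrightarrow> \<pi> j (\<sigma> w) = \<zero>\<^bsub>Qs j\<^esub>)"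
  proof -
    fix i assume i: "i \<in> I"
    have "\<one>\<^bsub>Qs i\<^esub> \<in> carrier (Qs i)" using ringQs[OF i] by (rule rg_simps)
    from single[OF i this] obtain e where e: "e \<in> carrier Q" "\<pi> i e = \<one>\<^bsub>Qs i\<^esub>" "\<forall>j\<in>I. j \<noteq> i \<longrightarrow> \<pi> j e = \<zero>\<^bsub>Qs j\<^esub>" by blast
    from qrep2[OF e(1)] obtain d u where du: "d \<in> C" "u \<in> carrier R" "\<sigma> u = \<sigma> d \<otimes>\<^bsub>Q\<^esub> e" by blast
    have pu: "\<pi> j (\<sigma> u) = \<pi> j (\<sigma> d) \<otimes>\<^bsub>Qs j\<^esub> \<pi> j e" if "j \<in> I" for j
      unfolding du(3) using pm[OF that sc[OF Cc[OF du(1)]] e(1)] .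
    have "\<pi> i (\<sigma> u) = \<pi> i (\<sigma> d)" unfolding pu[OF i] e(2)
      using ringQs[OF i] pc[OF i sc[OF Cc[OF du(1)]]] by (simp add: rg_simps)
    then have "\<pi> i (\<sigma> u) \<in> Units (Qs i)" using punit[OF i Cunit[OF du(1)]] by simp
    moreover have "\<pi> j (\<sigma> u) = \<zero>\<^bsub>Qs j\<^esub>" if "j \<in> I" "j \<noteq> i" for j
    proof -
      have "\<pi> j e = \<zero>\<^bsub>Qs j\<^esub>" using e(3) that by blast
      then show ?thesis unfolding pu[OF that(1)] using ringQs[OF that(1)] pc[OF that(1) sc[OF Cc[OF du(1)]]]
        by (simp add: rg_simps)
    qed
    ultimately show "\<exists>w\<in>carrier R. \<pi> i (\<sigma> w) \<in> Units (Qs i) \<and> (\<forall>j\<in>I. j \<noteq> i \<longrightarrow> \<pi> j (\<sigma> w) = \<zero>\<^bsub>Qs j\<^esub>)"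
      using du(2) by blast
  qed
  have compR: "\<And>x y. x \<in> carrier R \<Longrightarrow> y \<in> carrier R \<Longrightarrow> (\<And>j. j \<in> I \<Longrightarrow> \<pi> j (\<sigma> x) = \<pi> j (\<sigma> y)) \<Longrightarrow> x = y"
  proof -
    fix x y assume xy: "x \<in> carrier R" "y \<in> carrier R" "\<And>j. j \<in> I \<Longrightarrow> \<pi> j (\<sigma> x) = \<pi> j (\<sigma> y)"
    have "\<sigma> x = \<sigma> y" by (rule pinj[OF sc[OF xy(1)] sc[OF xy(2)] xy(3)])
    then show "x = y" using sinj xy(1,2) by blast
  qed
  have Eex: "\<And>i. i \<in> I \<Longrightarrow> \<exists>e\<in>carrier Q. \<pi> i e = \<one>\<^bsub>Qs i\<^esub> \<and> (\<forall>j\<in>I. j \<noteq> i \<longrightarrow> \<pi> j e = \<zero>\<^bsub>Qs j\<^esub>)"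
    using single ringQs rg_simps(5) by blast
  have memS': "\<And>i q. q \<in> S' i \<longleftrightarrow> q \<in> carrier Q \<and> \<pi> i q \<in> Units (Qs i)" by (simp add: S'_def)
  have Sp_den: "\<And>i. i \<in> I \<Longrightarrow> left_den_set Q (S' i)"
  proof -
    fix i assume i: "i \<in> I"
    interpret Qi: ring "Qs i" by (rule ringQs[OF i])
    from Eex[OF i] obtain e where e: "e \<in> carrier Q" "\<pi> i e = \<one>\<^bsub>Qs i\<^esub>" "\<forall>j\<in>I. j \<noteq> i \<longrightarrow> \<pi> j e = \<zero>\<^bsub>Qs j\<^esub>" by blast
    have eS: "e \<in> S' i" using e(1,2) memS' by simp
    have ms: "mult_subset Q (S' i)" unfolding mult_subset_def
    proof (intro conjI ballI)
      show "S' i \<subseteq> carrier Q" using memS' by blast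
      show "\<one>\<^bsub>Q\<^esub> \<in> S' i" using memS' p1[OF i] by simp
      show "\<zero>\<^bsub>Q\<^esub> \<notin> S' i" using memS' p0[OF i] z_nu[OF i] by simp
      show "a \<otimes>\<^bsub>Q\<^esub> b \<in> S' i" if "a \<in> S' i" "b \<in> S' i" for a b
        using that memS' pm[OF i] by simp
    qed
    have ore: "\<exists>s'\<in>S' i. \<exists>r'\<in>carrier Q. s' \<otimes>\<^bsub>Q\<^esub> r = r' \<otimes>\<^bsub>Q\<^esub> s" if rs: "r \<in> carrier Q" "s \<in> S' i" for r s
    proof -
      have su: "\<pi> i s \<in> Units (Qs i)" "s \<in> carrier Q" using rs(2) memS' by auto
      have prc: "\<pi> i r \<in> carrier (Qs i)" using pc[OF i rs(1)] .
      have "\<pi> i r \<otimes>\<^bsub>Qs i\<^esub> inv\<^bsub>Qs i\<^esub> (\<pi> i s) \<in> carrier (Qs i)" using su prc by auto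
      from single[OF i this] obtain r' where r': "r' \<in> carrier Q" "\<pi> i r' = \<pi> i r \<otimes>\<^bsub>Qs i\<^esub> inv\<^bsub>Qs i\<^esub> (\<pi> i s)"
        "\<forall>j\<in>I. j \<noteq> i \<longrightarrow> \<pi> j r' = \<zero>\<^bsub>Qs j\<^esub>" by blast
      have "e \<otimes>\<^bsub>Q\<^esub> r = r' \<otimes>\<^bsub>Q\<^esub> s"
      proof (rule pinj)
        show "e \<otimes>\<^bsub>Q\<^esub> r \<in> carrier Q" "r' \<otimes>\<^bsub>Q\<^esub> s \<in> carrier Q" using e(1) rs(1) r'(1) su(2) by auto
        fix j assume j: "j \<in> I"
        show "\<pi> j (e \<otimes>\<^bsub>Q\<^esub> r) = \<pi> j (r' \<otimes>\<^bsub>Q\<^esub> s)"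
        proof (cases "j = i")
          case True
          have "\<pi> i (e \<otimes>\<^bsub>Q\<^esub> r) = \<pi> i r" unfolding pm[OF i e(1) rs(1)] e(2) using prc by simp
          moreover have "\<pi> i (r' \<otimes>\<^bsub>Q\<^esub> s) = \<pi> i r" unfolding pm[OF i r'(1) su(2)] r'(2)
            using prc su(1) by (simp add: Qi.m_assoc Qi.Units_closed)
          ultimately show ?thesis using True by simp
        next
          case False
          have "\<pi> j e = \<zero>\<^bsub>Qs j\<^esub>" "\<pi> j r' = \<zero>\<^bsub>Qs j\<^esub>" using e(3) r'(3) j False by auto
          then show ?thesis unfolding pm[OF j e(1) rs(1)] pm[OF j r'(1) su(2)]
            using rg_simps(4)[OF ringQs[OF j]] pc[OF j] rs(1) su(2) by simp
        qed
      qed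
      then show ?thesis using eS r'(1) by blast
    qed
    have den: "\<exists>t\<in>S' i. t \<otimes>\<^bsub>Q\<^esub> r = \<zero>\<^bsub>Q\<^esub>" if rs: "r \<in> carrier Q" "s \<in> S' i" "r \<otimes>\<^bsub>Q\<^esub> s = \<zero>\<^bsub>Q\<^esub>" for r s
    proof -
      have su: "\<pi> i s \<in> Units (Qs i)" "s \<in> carrier Q" using rs(2) memS' by auto
      have prc: "\<pi> i r \<in> carrier (Qs i)" using pc[OF i rs(1)] .
      have z: "\<pi> i r \<otimes>\<^bsub>Qs i\<^esub> \<pi> i s = \<zero>\<^bsub>Qs i\<^esub>" using pm[OF i rs(1) su(2)] rs(3) p0[OF i] by simp
      have "\<pi> i r = (\<pi> i r \<otimes>\<^bsub>Qs i\<^esub> \<pi> i s) \<otimes>\<^bsub>Qs i\<^esub> inv\<^bsub>Qs i\<^esub> (\<pi> i s)"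
        using prc su(1) by (simp add: Qi.m_assoc Qi.Units_closed)
      also have "\<dots> = \<zero>\<^bsub>Qs i\<^esub>" unfolding z using su(1) by (simp add: Qi.Units_closed)
      finally have r0: "\<pi> i r = \<zero>\<^bsub>Qs i\<^esub>" .
      have "e \<otimes>\<^bsub>Q\<^esub> r = \<zero>\<^bsub>Q\<^esub>"
      proof (rule pinj)
        show "e \<otimes>\<^bsub>Q\<^esub> r \<in> carrier Q" "\<zero>\<^bsub>Q\<^esub> \<in> carrier Q" using e(1) rs(1) by auto
        fix j assume j: "j \<in> I"
        show "\<pi> j (e \<otimes>\<^bsub>Q\<^esub> r) = \<pi> j \<zero>\<^bsub>Q\<^esub>"
        proof (cases "j = i")
          case True
          then show ?thesis unfolding pm[OF j e(1) rs(1)] p0[OF j] using r0 e(2) by simp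
        next
          case False
          have "\<pi> j e = \<zero>\<^bsub>Qs j\<^esub>" using e(3) j False by auto
          then show ?thesis unfolding pm[OF j e(1) rs(1)] p0[OF j]
            using rg_simps(4)[OF ringQs[OF j]] pc[OF j rs(1)] by simp
        qed
      qed
      then show ?thesis using eS by blast
    qed
    show "left_den_set Q (S' i)" unfolding left_den_set_def left_Ore_set_def
      using ms ore den by blast
  qed
  have finI: "finite I" unfolding I_def by simp
  have Sp_cover: "\<And>T. left_den_set Q T \<Longrightarrow> \<exists>i\<in>I. T \<subseteq> S' i"
  proof -
    fix T assume T: "left_den_set Q T"
    have Tms: "T \<subseteq> carrier Q" "\<one>\<^bsub>Q\<^esub> \<in> T" "\<zero>\<^bsub>Q\<^esub> \<notin> T" "\<And>a b. a \<in> T \<Longrightarrow> b \<in> T \<Longrightarrow> a \<otimes>\<^bsub>Q\<^esub> b \<in> T"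
      using T unfolding left_den_set_def left_Ore_set_def mult_subset_def by auto
    have TOre: "\<And>r t. r \<in> carrier Q \<Longrightarrow> t \<in> T \<Longrightarrow> \<exists>t'\<in>T. \<exists>r'\<in>carrier Q. t' \<otimes>\<^bsub>Q\<^esub> r = r' \<otimes>\<^bsub>Q\<^esub> t"
      using T unfolding left_den_set_def left_Ore_set_def by blast
    have Tden: "\<And>r t. r \<in> carrier Q \<Longrightarrow> t \<in> T \<Longrightarrow> r \<otimes>\<^bsub>Q\<^esub> t = \<zero>\<^bsub>Q\<^esub> \<Longrightarrow> \<exists>t'\<in>T. t' \<otimes>\<^bsub>Q\<^esub> r = \<zero>\<^bsub>Q\<^esub>"
      using T unfolding left_den_set_def by blast
    have dich: "(\<forall>t\<in>T. \<pi> i t \<in> Units (Qs i)) \<or> (\<exists>t\<in>T. \<pi> i t = \<zero>\<^bsub>Qs i\<^esub>)" if i: "i \<in> I" for i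
    proof (rule dichotomy[OF ringQ saQs[OF i] ph[OF i], where C = "{\<one>\<^bsub>Q\<^esub>}"])
      interpret Qi: ring "Qs i" by (rule ringQs[OF i])
      from Eex[OF i] obtain e where e: "e \<in> carrier Q" "\<pi> i e = \<one>\<^bsub>Qs i\<^esub>" "\<forall>j\<in>I. j \<noteq> i \<longrightarrow> \<pi> j e = \<zero>\<^bsub>Qs j\<^esub>" by blast
      show "{\<one>\<^bsub>Q\<^esub>} \<subseteq> carrier Q" "\<one>\<^bsub>Q\<^esub> \<in> {\<one>\<^bsub>Q\<^esub>}" by auto
      show "a \<otimes>\<^bsub>Q\<^esub> b \<in> {\<one>\<^bsub>Q\<^esub>}" if "a \<in> {\<one>\<^bsub>Q\<^esub>}" "b \<in> {\<one>\<^bsub>Q\<^esub>}" for a b using that by simp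
      show "\<pi> i c \<in> Units (Qs i)" if "c \<in> {\<one>\<^bsub>Q\<^esub>}" for c using that p1[OF i] rg_one_unit[OF ringQs[OF i]] by simp
      show "\<exists>c'\<in>{\<one>\<^bsub>Q\<^esub>}. \<exists>r'\<in>carrier Q. c' \<otimes>\<^bsub>Q\<^esub> r = r' \<otimes>\<^bsub>Q\<^esub> c" if "r \<in> carrier Q" "c \<in> {\<one>\<^bsub>Q\<^esub>}" for r c
        using that by auto
      show "\<exists>c\<in>{\<one>\<^bsub>Q\<^esub>}. \<exists>r\<in>carrier Q. y = inv\<^bsub>Qs i\<^esub> (\<pi> i c) \<otimes>\<^bsub>Qs i\<^esub> \<pi> i r" if y: "y \<in> carrier (Qs i)" for y
      proof -
        from single[OF i y] obtain q where q: "q \<in> carrier Q" "\<pi> i q = y" by blast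
        have "y = inv\<^bsub>Qs i\<^esub> (\<pi> i \<one>\<^bsub>Q\<^esub>) \<otimes>\<^bsub>Qs i\<^esub> \<pi> i q" unfolding p1[OF i] q(2) using y by simp
        then show ?thesis using q(1) by blast
      qed
      show "T \<subseteq> carrier Q" "\<one>\<^bsub>Q\<^esub> \<in> T" "\<And>a b. a \<in> T \<Longrightarrow> b \<in> T \<Longrightarrow> a \<otimes>\<^bsub>Q\<^esub> b \<in> T" using Tms by auto
      show "\<And>r t. r \<in> carrier Q \<Longrightarrow> t \<in> T \<Longrightarrow> \<exists>t'\<in>T. \<exists>r'\<in>carrier Q. t' \<otimes>\<^bsub>Q\<^esub> r = r' \<otimes>\<^bsub>Q\<^esub> t" by (rule TOre)
      show "\<exists>t'\<in>T. \<exists>v\<in>carrier Q. \<pi> i v \<in> Units (Qs i) \<and> \<pi> i t' \<otimes>\<^bsub>Qs i\<^esub> (\<pi> i v \<otimes>\<^bsub>Qs i\<^esub> \<pi> i r) = \<zero>\<^bsub>Qs i\<^esub>"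
        if rt: "r \<in> carrier Q" "t \<in> T" "\<pi> i r \<otimes>\<^bsub>Qs i\<^esub> \<pi> i t = \<zero>\<^bsub>Qs i\<^esub>" for r t
      proof -
        have tc: "t \<in> carrier Q" using rt(2) Tms(1) by blast
        have "(e \<otimes>\<^bsub>Q\<^esub> r) \<otimes>\<^bsub>Q\<^esub> t = \<zero>\<^bsub>Q\<^esub>"
        proof (rule pinj)
          show "(e \<otimes>\<^bsub>Q\<^esub> r) \<otimes>\<^bsub>Q\<^esub> t \<in> carrier Q" "\<zero>\<^bsub>Q\<^esub> \<in> carrier Q" using e(1) rt(1) tc by auto
          fix j assume j: "j \<in> I"
          have eq: "\<pi> j ((e \<otimes>\<^bsub>Q\<^esub> r) \<otimes>\<^bsub>Q\<^esub> t) = \<pi> j e \<otimes>\<^bsub>Qs j\<^esub> (\<pi> j r \<otimes>\<^bsub>Qs j\<^esub> \<pi> j t)"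
            using pm[OF j] e(1) rt(1) tc pc[OF j] ringQs[OF j] by (simp add: ring.ring_simprules(11))
          show "\<pi> j ((e \<otimes>\<^bsub>Q\<^esub> r) \<otimes>\<^bsub>Q\<^esub> t) = \<pi> j \<zero>\<^bsub>Q\<^esub>"
          proof (cases "j = i")
            case True
            then show ?thesis unfolding eq p0[OF j] using rt(3) e(2) rg_simps(2)[OF ringQs[OF j]] by simp
          next
            case False
            have "\<pi> j e = \<zero>\<^bsub>Qs j\<^esub>" using e(3) j False by auto
            then show ?thesis unfolding eq p0[OF j]
              using rg_simps(4)[OF ringQs[OF j]] pc[OF j] rt(1) tc ringQs[OF j] by (simp add: ring.ring_simprules(5))
          qed
        qed
        then have "(e \<otimes>\<^bsub>Q\<^esub> r) \<otimes>\<^bsub>Q\<^esub> t = \<zero>\<^bsub>Q\<^esub>" .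
        from Tden[OF _ rt(2) this] e(1) rt(1) obtain t' where t': "t' \<in> T" "t' \<otimes>\<^bsub>Q\<^esub> (e \<otimes>\<^bsub>Q\<^esub> r) = \<zero>\<^bsub>Q\<^esub>" by auto
        have t'c: "t' \<in> carrier Q" using t'(1) Tms(1) by blast
        have "\<pi> i t' \<otimes>\<^bsub>Qs i\<^esub> (\<pi> i e \<otimes>\<^bsub>Qs i\<^esub> \<pi> i r) = \<pi> i (t' \<otimes>\<^bsub>Q\<^esub> (e \<otimes>\<^bsub>Q\<^esub> r))"
          using pm[OF i] t'c e(1) rt(1) by simp
        also have "\<dots> = \<zero>\<^bsub>Qs i\<^esub>" unfolding t'(2) p0[OF i] ..
        finally have F: "\<pi> i t' \<otimes>\<^bsub>Qs i\<^esub> (\<pi> i e \<otimes>\<^bsub>Qs i\<^esub> \<pi> i r) = \<zero>\<^bsub>Qs i\<^esub>" .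
        have "\<pi> i e \<in> Units (Qs i)" using e(2) rg_one_unit[OF ringQs[OF i]] by simp
        then show ?thesis using F t'(1) e(1) by blast
      qed
    qed
    show "\<exists>i\<in>I. T \<subseteq> S' i"
    proof (rule ccontr)
      assume no: "\<not> (\<exists>i\<in>I. T \<subseteq> S' i)"
      have "\<exists>t\<in>T. \<pi> i t = \<zero>\<^bsub>Qs i\<^esub>" if i: "i \<in> I" for i
      proof -
        have "\<not> (\<forall>t\<in>T. \<pi> i t \<in> Units (Qs i))"
        proof
          assume "\<forall>t\<in>T. \<pi> i t \<in> Units (Qs i)"
          then have "T \<subseteq> S' i" using memS' Tms(1) by blast
          then show False using no i by blast
        qed
        then show ?thesis using dich[OF i] by blast
      qed
      then have "\<exists>t\<in>T. \<forall>j\<in>I. \<pi> j t = \<zero>\<^bsub>Qs j\<^esub>"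
        using zero_product[OF finI ringQ Tms(1,2,4), of Qs \<pi>] ringQs ph by blast
      then obtain t where t: "t \<in> T" "\<forall>j\<in>I. \<pi> j t = \<zero>\<^bsub>Qs j\<^esub>" by blast
      have "t = \<zero>\<^bsub>Q\<^esub>"
        by (rule pinj) (use t Tms(1) p0 in auto)
      then show False using t(1) Tms(3) by simp
    qed
  qed
  have Sp_dist: "\<And>i j. i \<in> I \<Longrightarrow> j \<in> I \<Longrightarrow> S' i \<subseteq> S' j \<Longrightarrow> i = j"
  proof (rule ccontr)
    fix i j assume ij: "i \<in> I" "j \<in> I" "S' i \<subseteq> S' j" "i \<noteq> j"
    from Eex[OF ij(1)] obtain e where e: "e \<in> carrier Q" "\<pi> i e = \<one>\<^bsub>Qs i\<^esub>" "\<forall>j\<in>I. j \<noteq> i \<longrightarrow> \<pi> j e = \<zero>\<^bsub>Qs j\<^esub>" by blast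
    have "e \<in> S' i" using e(1,2) memS' rg_one_unit[OF ringQs[OF ij(1)]] by simp
    then have "e \<in> S' j" using ij(3) by blast
    then have "\<pi> j e \<in> Units (Qs j)" using memS' by blast
    moreover have "\<pi> j e = \<zero>\<^bsub>Qs j\<^esub>" using e(3) ij(2,4) by auto
    ultimately show False using z_nu[OF ij(2)] by simp
  qed
  have maxQ: "maxDen_l Q = S' ` I" by (rule maxDen_char[OF Sp_den Sp_cover Sp_dist])
  have memS: "\<And>i r. r \<in> S i \<longleftrightarrow> r \<in> carrier R \<and> \<pi> i (\<sigma> r) \<in> Units (Qs i)" using sc by (auto simp: S_def)
  have psm: "\<And>j x y. j \<in> I \<Longrightarrow> x \<in> carrier R \<Longrightarrow> y \<in> carrier R \<Longrightarrow>
      \<pi> j (\<sigma> (x \<otimes>\<^bsub>R\<^esub> y)) = \<pi> j (\<sigma> x) \<otimes>\<^bsub>Qs j\<^esub> \<pi> j (\<sigma> y)"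
    using sm pm sc by simp
  have psc: "\<And>j x. j \<in> I \<Longrightarrow> x \<in> carrier R \<Longrightarrow> \<pi> j (\<sigma> x) \<in> carrier (Qs j)" using pc sc by blast
  have ps0: "\<And>j. j \<in> I \<Longrightarrow> \<pi> j (\<sigma> \<zero>\<^bsub>R\<^esub>) = \<zero>\<^bsub>Qs j\<^esub>" using p0 by simp
  have Cu: "\<And>j c. j \<in> I \<Longrightarrow> c \<in> C \<Longrightarrow> \<pi> j (\<sigma> c) \<in> Units (Qs j)" using punit Cunit by blast
  have S_den: "\<And>i. i \<in> I \<Longrightarrow> left_den_set R (S i)"
  proof -
    fix i assume i: "i \<in> I"
    interpret Qi: ring "Qs i" by (rule ringQs[OF i])
    from Wex[OF i] obtain w where w: "w \<in> carrier R" "\<pi> i (\<sigma> w) \<in> Units (Qs i)" "\<forall>j\<in>I. j \<noteq> i \<longrightarrow> \<pi> j (\<sigma> w) = \<zero>\<^bsub>Qs j\<^esub>" by blast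
    have wS: "w \<in> S i" using w(1,2) memS by simp
    have ms: "mult_subset R (S i)" unfolding mult_subset_def
    proof (intro conjI ballI)
      show "S i \<subseteq> carrier R" using memS by blast
      show "\<one>\<^bsub>R\<^esub> \<in> S i" using memS p1[OF i] s1 rg_one_unit[OF ringQs[OF i]] by simp
      show "\<zero>\<^bsub>R\<^esub> \<notin> S i" using memS ps0[OF i] z_nu[OF i] by simp
      show "a \<otimes>\<^bsub>R\<^esub> b \<in> S i" if "a \<in> S i" "b \<in> S i" for a b
        using that memS psm[OF i] by simp
    qed
    have ore: "\<exists>s'\<in>S i. \<exists>r'\<in>carrier R. s' \<otimes>\<^bsub>R\<^esub> r = r' \<otimes>\<^bsub>R\<^esub> s" if rs: "r \<in> carrier R" "s \<in> S i" for r s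
    proof -
      have su: "\<pi> i (\<sigma> s) \<in> Units (Qs i)" "s \<in> carrier R" using rs(2) memS by auto
      have prc: "\<pi> i (\<sigma> r) \<in> carrier (Qs i)" using psc[OF i rs(1)] .
      have pwc: "\<pi> i (\<sigma> w) \<in> carrier (Qs i)" using psc[OF i w(1)] .
      define y where "y = \<pi> i (\<sigma> w) \<otimes>\<^bsub>Qs i\<^esub> \<pi> i (\<sigma> r) \<otimes>\<^bsub>Qs i\<^esub> inv\<^bsub>Qs i\<^esub> (\<pi> i (\<sigma> s))"
      have yc: "y \<in> carrier (Qs i)" unfolding y_def using su prc pwc by auto
      from single[OF i yc] obtain q where q: "q \<in> carrier Q" "\<pi> i q = y"
        "\<forall>j\<in>I. j \<noteq> i \<longrightarrow> \<pi> j q = \<zero>\<^bsub>Qs j\<^esub>" by blast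
      from qrep2[OF q(1)] obtain d u where du: "d \<in> C" "u \<in> carrier R" "\<sigma> u = \<sigma> d \<otimes>\<^bsub>Q\<^esub> q" by blast
      have dc: "d \<in> carrier R" using Cc du(1) .
      have pu: "\<pi> j (\<sigma> u) = \<pi> j (\<sigma> d) \<otimes>\<^bsub>Qs j\<^esub> \<pi> j q" if "j \<in> I" for j
        unfolding du(3) using pm[OF that sc[OF dc] q(1)] .
      have "(d \<otimes>\<^bsub>R\<^esub> w) \<otimes>\<^bsub>R\<^esub> r = u \<otimes>\<^bsub>R\<^esub> s"
      proof (rule compR)
        show "(d \<otimes>\<^bsub>R\<^esub> w) \<otimes>\<^bsub>R\<^esub> r \<in> carrier R" "u \<otimes>\<^bsub>R\<^esub> s \<in> carrier R" using dc w(1) rs(1) du(2) su(2) by auto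
        fix j assume j: "j \<in> I"
        interpret Qj: ring "Qs j" by (rule ringQs[OF j])
        have e1: "\<pi> j (\<sigma> ((d \<otimes>\<^bsub>R\<^esub> w) \<otimes>\<^bsub>R\<^esub> r)) = \<pi> j (\<sigma> d) \<otimes>\<^bsub>Qs j\<^esub> (\<pi> j (\<sigma> w) \<otimes>\<^bsub>Qs j\<^esub> \<pi> j (\<sigma> r))"
          unfolding psm[OF j R.m_closed[OF dc w(1)] rs(1)] psm[OF j dc w(1)] using dc w(1) rs(1) psc[OF j] by (simp add: Qj.m_assoc)
        have e2: "\<pi> j (\<sigma> (u \<otimes>\<^bsub>R\<^esub> s)) = \<pi> j (\<sigma> d) \<otimes>\<^bsub>Qs j\<^esub> (\<pi> j q \<otimes>\<^bsub>Qs j\<^esub> \<pi> j (\<sigma> s))"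
          unfolding psm[OF j du(2) su(2)] pu[OF j] using psc[OF j] dc pc[OF j q(1)] su(2) by (simp add: Qj.m_assoc)
        show "\<pi> j (\<sigma> ((d \<otimes>\<^bsub>R\<^esub> w) \<otimes>\<^bsub>R\<^esub> r)) = \<pi> j (\<sigma> (u \<otimes>\<^bsub>R\<^esub> s))"
        proof (cases "j = i")
          case True
          have "\<pi> i q \<otimes>\<^bsub>Qs i\<^esub> \<pi> i (\<sigma> s) = \<pi> i (\<sigma> w) \<otimes>\<^bsub>Qs i\<^esub> \<pi> i (\<sigma> r)"
            unfolding q(2) y_def using su(1) prc pwc by (simp add: Qi.m_assoc Qi.Units_closed)
          then show ?thesis unfolding e1 e2 using True by simp
        next
          case False
          have "\<pi> j (\<sigma> w) = \<zero>\<^bsub>Qs j\<^esub>" "\<pi> j q = \<zero>\<^bsub>Qs j\<^esub>" using w(3) q(3) j False by auto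
          then show ?thesis unfolding e1 e2 using psc[OF j] rs(1) su(2) dc by simp
        qed
      qed
      moreover have "d \<otimes>\<^bsub>R\<^esub> w \<in> S i" using memS psm[OF i dc w(1)] Cu[OF i du(1)] w(1,2) dc by simp
      ultimately show ?thesis using du(2) by blast
    qed
    have den: "\<exists>t\<in>S i. t \<otimes>\<^bsub>R\<^esub> r = \<zero>\<^bsub>R\<^esub>" if rs: "r \<in> carrier R" "s \<in> S i" "r \<otimes>\<^bsub>R\<^esub> s = \<zero>\<^bsub>R\<^esub>" for r s
    proof -
      have su: "\<pi> i (\<sigma> s) \<in> Units (Qs i)" "s \<in> carrier R" using rs(2) memS by auto
      have prc: "\<pi> i (\<sigma> r) \<in> carrier (Qs i)" using psc[OF i rs(1)] .
      have z: "\<pi> i (\<sigma> r) \<otimes>\<^bsub>Qs i\<^esub> \<pi> i (\<sigma> s) = \<zero>\<^bsub>Qs i\<^esub>" using psm[OF i rs(1) su(2)] rs(3) ps0[OF i] by simp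
      have "\<pi> i (\<sigma> r) = (\<pi> i (\<sigma> r) \<otimes>\<^bsub>Qs i\<^esub> \<pi> i (\<sigma> s)) \<otimes>\<^bsub>Qs i\<^esub> inv\<^bsub>Qs i\<^esub> (\<pi> i (\<sigma> s))"
        using prc su(1) by (simp add: Qi.m_assoc Qi.Units_closed)
      also have "\<dots> = \<zero>\<^bsub>Qs i\<^esub>" unfolding z using su(1) by (simp add: Qi.Units_closed)
      finally have r0: "\<pi> i (\<sigma> r) = \<zero>\<^bsub>Qs i\<^esub>" .
      have "w \<otimes>\<^bsub>R\<^esub> r = \<zero>\<^bsub>R\<^esub>"
      proof (rule compR)
        show "w \<otimes>\<^bsub>R\<^esub> r \<in> carrier R" "\<zero>\<^bsub>R\<^esub> \<in> carrier R" using w(1) rs(1) by auto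
        fix j assume j: "j \<in> I"
        interpret Qj: ring "Qs j" by (rule ringQs[OF j])
        show "\<pi> j (\<sigma> (w \<otimes>\<^bsub>R\<^esub> r)) = \<pi> j (\<sigma> \<zero>\<^bsub>R\<^esub>)"
        proof (cases "j = i")
          case True
          then show ?thesis unfolding psm[OF j w(1) rs(1)] ps0[OF j] using r0 psc[OF j w(1)] by simp
        next
          case False
          have "\<pi> j (\<sigma> w) = \<zero>\<^bsub>Qs j\<^esub>" using w(3) j False by auto
          then show ?thesis unfolding psm[OF j w(1) rs(1)] ps0[OF j] using psc[OF j rs(1)] by simp
        qed
      qed
      then show ?thesis using wS by blast
    qed
    show "left_den_set R (S i)" unfolding left_den_set_def left_Ore_set_def
      using ms ore den by blast
  qed
  have fh: "\<And>i. i \<in> I \<Longrightarrow> (\<lambda>r. \<pi> i (\<sigma> r)) \<in> ring_hom R (Qs i)"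
  proof -
    fix i assume i: "i \<in> I"
    have "\<pi> i \<circ> \<sigma> \<in> ring_hom R (Qs i)" using ring_hom_trans[OF sh ph[OF i]] .
    then show "(\<lambda>r. \<pi> i (\<sigma> r)) \<in> ring_hom R (Qs i)" by (simp add: comp_def)
  qed
  have S_cover: "\<And>T. left_den_set R T \<Longrightarrow> \<exists>i\<in>I. T \<subseteq> S i"
  proof -
    fix T assume T: "left_den_set R T"
    have Tms: "T \<subseteq> carrier R" "\<one>\<^bsub>R\<^esub> \<in> T" "\<zero>\<^bsub>R\<^esub> \<notin> T" "\<And>a b. a \<in> T \<Longrightarrow> b \<in> T \<Longrightarrow> a \<otimes>\<^bsub>R\<^esub> b \<in> T"
      using T unfolding left_den_set_def left_Ore_set_def mult_subset_def by auto
    have TOre: "\<And>r t. r \<in> carrier R \<Longrightarrow> t \<in> T \<Longrightarrow> \<exists>t'\<in>T. \<exists>r'\<in>carrier R. t' \<otimes>\<^bsub>R\<^esub> r = r' \<otimes>\<^bsub>R\<^esub> t"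
      using T unfolding left_den_set_def left_Ore_set_def by blast
    have Tden: "\<And>r t. r \<in> carrier R \<Longrightarrow> t \<in> T \<Longrightarrow> r \<otimes>\<^bsub>R\<^esub> t = \<zero>\<^bsub>R\<^esub> \<Longrightarrow> \<exists>t'\<in>T. t' \<otimes>\<^bsub>R\<^esub> r = \<zero>\<^bsub>R\<^esub>"
      using T unfolding left_den_set_def by blast
    have dich: "(\<forall>t\<in>T. \<pi> i (\<sigma> t) \<in> Units (Qs i)) \<or> (\<exists>t\<in>T. \<pi> i (\<sigma> t) = \<zero>\<^bsub>Qs i\<^esub>)" if i: "i \<in> I" for i
    proof (rule dichotomy[OF R(1) saQs[OF i] fh[OF i], where C = C])
      interpret Qi: ring "Qs i" by (rule ringQs[OF i])
      from Wex[OF i] obtain w where w: "w \<in> carrier R" "\<pi> i (\<sigma> w) \<in> Units (Qs i)" "\<forall>j\<in>I. j \<noteq> i \<longrightarrow> \<pi> j (\<sigma> w) = \<zero>\<^bsub>Qs j\<^esub>" by blast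
      show "C \<subseteq> carrier R" "\<one>\<^bsub>R\<^esub> \<in> C" using Cc C1 by auto
      show "\<And>a b. a \<in> C \<Longrightarrow> b \<in> C \<Longrightarrow> a \<otimes>\<^bsub>R\<^esub> b \<in> C" by (rule Cm)
      show "\<And>c. c \<in> C \<Longrightarrow> \<pi> i (\<sigma> c) \<in> Units (Qs i)" using Cu[OF i] .
      show "\<And>r c. r \<in> carrier R \<Longrightarrow> c \<in> C \<Longrightarrow> \<exists>c'\<in>C. \<exists>r'\<in>carrier R. c' \<otimes>\<^bsub>R\<^esub> r = r' \<otimes>\<^bsub>R\<^esub> c" by (rule COre)
      show "\<exists>c\<in>C. \<exists>r\<in>carrier R. y = inv\<^bsub>Qs i\<^esub> (\<pi> i (\<sigma> c)) \<otimes>\<^bsub>Qs i\<^esub> \<pi> i (\<sigma> r)" if y: "y \<in> carrier (Qs i)" for y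
      proof -
        from single[OF i y] obtain q where q: "q \<in> carrier Q" "\<pi> i q = y" by blast
        from qrep[OF q(1)] obtain c r where cr: "c \<in> C" "r \<in> carrier R" "q = inv\<^bsub>Q\<^esub> (\<sigma> c) \<otimes>\<^bsub>Q\<^esub> \<sigma> r" by blast
        have "y = \<pi> i (inv\<^bsub>Q\<^esub> (\<sigma> c) \<otimes>\<^bsub>Q\<^esub> \<sigma> r)" using q(2) cr(3) by simp
        also have "\<dots> = \<pi> i (inv\<^bsub>Q\<^esub> (\<sigma> c)) \<otimes>\<^bsub>Qs i\<^esub> \<pi> i (\<sigma> r)"
          using pm[OF i] Cunit[OF cr(1)] sc[OF cr(2)] by (simp add: Q.Units_closed)
        also have "\<dots> = inv\<^bsub>Qs i\<^esub> (\<pi> i (\<sigma> c)) \<otimes>\<^bsub>Qs i\<^esub> \<pi> i (\<sigma> r)"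
          using pinv[OF i Cunit[OF cr(1)]] by simp
        finally show ?thesis using cr(1,2) by blast
      qed
      show "T \<subseteq> carrier R" "\<one>\<^bsub>R\<^esub> \<in> T" "\<And>a b. a \<in> T \<Longrightarrow> b \<in> T \<Longrightarrow> a \<otimes>\<^bsub>R\<^esub> b \<in> T" using Tms by auto
      show "\<And>r t. r \<in> carrier R \<Longrightarrow> t \<in> T \<Longrightarrow> \<exists>t'\<in>T. \<exists>r'\<in>carrier R. t' \<otimes>\<^bsub>R\<^esub> r = r' \<otimes>\<^bsub>R\<^esub> t" by (rule TOre)
      show "\<exists>t'\<in>T. \<exists>v\<in>carrier R. \<pi> i (\<sigma> v) \<in> Units (Qs i) \<and> \<pi> i (\<sigma> t') \<otimes>\<^bsub>Qs i\<^esub> (\<pi> i (\<sigma> v) \<otimes>\<^bsub>Qs i\<^esub> \<pi> i (\<sigma> r)) = \<zero>\<^bsub>Qs i\<^esub>"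
        if rt: "r \<in> carrier R" "t \<in> T" "\<pi> i (\<sigma> r) \<otimes>\<^bsub>Qs i\<^esub> \<pi> i (\<sigma> t) = \<zero>\<^bsub>Qs i\<^esub>" for r t
      proof -
        have tc: "t \<in> carrier R" using rt(2) Tms(1) by blast
        have "(w \<otimes>\<^bsub>R\<^esub> r) \<otimes>\<^bsub>R\<^esub> t = \<zero>\<^bsub>R\<^esub>"
        proof (rule compR)
          show "(w \<otimes>\<^bsub>R\<^esub> r) \<otimes>\<^bsub>R\<^esub> t \<in> carrier R" "\<zero>\<^bsub>R\<^esub> \<in> carrier R" using w(1) rt(1) tc by auto
          fix j assume j: "j \<in> I"
          interpret Qj: ring "Qs j" by (rule ringQs[OF j])
          have eq: "\<pi> j (\<sigma> ((w \<otimes>\<^bsub>R\<^esub> r) \<otimes>\<^bsub>R\<^esub> t)) = \<pi> j (\<sigma> w) \<otimes>\<^bsub>Qs j\<^esub> (\<pi> j (\<sigma> r) \<otimes>\<^bsub>Qs j\<^esub> \<pi> j (\<sigma> t))"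
            unfolding psm[OF j R.m_closed[OF w(1) rt(1)] tc] psm[OF j w(1) rt(1)] using w(1) rt(1) tc psc[OF j] by (simp add: Qj.m_assoc)
          show "\<pi> j (\<sigma> ((w \<otimes>\<^bsub>R\<^esub> r) \<otimes>\<^bsub>R\<^esub> t)) = \<pi> j (\<sigma> \<zero>\<^bsub>R\<^esub>)"
          proof (cases "j = i")
            case True
            then show ?thesis unfolding eq ps0[OF j] using rt(3) psc[OF j w(1)] by simp
          next
            case False
            have "\<pi> j (\<sigma> w) = \<zero>\<^bsub>Qs j\<^esub>" using w(3) j False by auto
            then show ?thesis unfolding eq ps0[OF j] using psc[OF j] rt(1) tc by simp
          qed
        qed
        from Tden[OF _ rt(2) this] w(1) rt(1) obtain t' where t': "t' \<in> T" "t' \<otimes>\<^bsub>R\<^esub> (w \<otimes>\<^bsub>R\<^esub> r) = \<zero>\<^bsub>R\<^esub>" by auto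
        have t'c: "t' \<in> carrier R" using t'(1) Tms(1) by blast
        have "\<pi> i (\<sigma> t') \<otimes>\<^bsub>Qs i\<^esub> (\<pi> i (\<sigma> w) \<otimes>\<^bsub>Qs i\<^esub> \<pi> i (\<sigma> r)) = \<pi> i (\<sigma> (t' \<otimes>\<^bsub>R\<^esub> (w \<otimes>\<^bsub>R\<^esub> r)))"
          unfolding psm[OF i t'c R.m_closed[OF w(1) rt(1)]] psm[OF i w(1) rt(1)] ..
        also have "\<dots> = \<zero>\<^bsub>Qs i\<^esub>" unfolding t'(2) ps0[OF i] ..
        finally have F: "\<pi> i (\<sigma> t') \<otimes>\<^bsub>Qs i\<^esub> (\<pi> i (\<sigma> w) \<otimes>\<^bsub>Qs i\<^esub> \<pi> i (\<sigma> r)) = \<zero>\<^bsub>Qs i\<^esub>" .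
        then show ?thesis using F t'(1) w(1,2) by blast
      qed
    qed
    show "\<exists>i\<in>I. T \<subseteq> S i"
    proof (rule ccontr)
      assume no: "\<not> (\<exists>i\<in>I. T \<subseteq> S i)"
      have "\<exists>t\<in>T. \<pi> i (\<sigma> t) = \<zero>\<^bsub>Qs i\<^esub>" if i: "i \<in> I" for i
      proof -
        have "\<not> (\<forall>t\<in>T. \<pi> i (\<sigma> t) \<in> Units (Qs i))"
        proof
          assume "\<forall>t\<in>T. \<pi> i (\<sigma> t) \<in> Units (Qs i)"
          then have "T \<subseteq> S i" using memS Tms(1) by blast
          then show False using no i by blast
        qed
        then show ?thesis using dich[OF i] by blast
      qed
      then have "\<exists>t\<in>T. \<forall>j\<in>I. (\<lambda>j r. \<pi> j (\<sigma> r)) j t = \<zero>\<^bsub>Qs j\<^esub>"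
        using zero_product[OF finI R(1) Tms(1,2,4), of Qs "\<lambda>j r. \<pi> j (\<sigma> r)"] ringQs fh by blast
      then obtain t where t: "t \<in> T" "\<forall>j\<in>I. \<pi> j (\<sigma> t) = \<zero>\<^bsub>Qs j\<^esub>" by auto
      have "t = \<zero>\<^bsub>R\<^esub>"
        by (rule compR) (use t Tms(1) ps0 in auto)
      then show False using t(1) Tms(3) by simp
    qed
  qed
  have S_dist: "\<And>i j. i \<in> I \<Longrightarrow> j \<in> I \<Longrightarrow> S i \<subseteq> S j \<Longrightarrow> i = j"
  proof (rule ccontr)
    fix i j assume ij: "i \<in> I" "j \<in> I" "S i \<subseteq> S j" "i \<noteq> j"
    from Wex[OF ij(1)] obtain w where w: "w \<in> carrier R" "\<pi> i (\<sigma> w) \<in> Units (Qs i)" "\<forall>j\<in>I. j \<noteq> i \<longrightarrow> \<pi> j (\<sigma> w) = \<zero>\<^bsub>Qs j\<^esub>" by blast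
    have "w \<in> S i" using w(1,2) memS by simp
    then have "w \<in> S j" using ij(3) by blast
    then have "\<pi> j (\<sigma> w) \<in> Units (Qs j)" using memS by blast
    moreover have "\<pi> j (\<sigma> w) = \<zero>\<^bsub>Qs j\<^esub>" using w(3) ij(2,4) by auto
    ultimately show False using z_nu[OF ij(2)] by simp
  qed
  have maxR: "maxDen_l R = S ` I" by (rule maxDen_char[OF S_den S_cover S_dist])
  have CinS: "\<And>i. i \<in> I \<Longrightarrow> C \<subseteq> S i" using memS Cc Cu by blast
  have pre: "\<And>i. i \<in> I \<Longrightarrow> {r \<in> carrier R. \<sigma> r \<in> S' i} = S i" using memS memS' sc by auto
  have tilde: "\<And>i. i \<in> I \<Longrightarrow> tilde_set R Q \<sigma> (S i) = S' i"
  proof -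
    fix i assume i: "i \<in> I"
    interpret Qi: ring "Qs i" by (rule ringQs[OF i])
    let ?Y = "\<sigma> ` S i \<union> {inv\<^bsub>Q\<^esub> (\<sigma> c) | c. c \<in> regular_elems R}"
    have "mult_monoid_gen Q ?Y \<subseteq> S' i"
    proof (rule mmg_sub)
      show "S' i \<subseteq> carrier Q" using memS' by blast
      show "\<one>\<^bsub>Q\<^esub> \<in> S' i" using memS' p1[OF i] by simp
      show "a \<otimes>\<^bsub>Q\<^esub> b \<in> S' i" if "a \<in> S' i" "b \<in> S' i" for a b
        using that memS' pm[OF i] by simp
      show "?Y \<subseteq> S' i"
      proof
        fix y assume "y \<in> ?Y"
        then consider (a) r where "r \<in> S i" "y = \<sigma> r" | (b) c where "c \<in> C" "y = inv\<^bsub>Q\<^esub> (\<sigma> c)"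
          unfolding C_def by blast
        then show "y \<in> S' i"
        proof cases
          case a then show ?thesis using memS memS' sc by auto
        next
          case b
          have "\<pi> i y = inv\<^bsub>Qs i\<^esub> (\<pi> i (\<sigma> c))" unfolding b(2) using pinv[OF i Cunit[OF b(1)]] .
          then have "\<pi> i y \<in> Units (Qs i)" using Cu[OF i b(1)] by simp
          moreover have "y \<in> carrier Q" unfolding b(2) using Cunit[OF b(1)] by (simp add: Q.Units_closed)
          ultimately show ?thesis using memS' by simp
        qed
      qed
    qed
    moreover have "S' i \<subseteq> mult_monoid_gen Q ?Y"
    proof
      fix q assume q: "q \<in> S' i"
      have qc: "q \<in> carrier Q" "\<pi> i q \<in> Units (Qs i)" using q memS' by auto
      from qrep[OF qc(1)] obtain c r where cr: "c \<in> C" "r \<in> carrier R" "q = inv\<^bsub>Q\<^esub> (\<sigma> c) \<otimes>\<^bsub>Q\<^esub> \<sigma> r" by blast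
      have cu: "\<sigma> c \<in> Units Q" using Cunit[OF cr(1)] .
      have "\<sigma> r = \<sigma> c \<otimes>\<^bsub>Q\<^esub> q"
      proof -
        have "\<sigma> c \<otimes>\<^bsub>Q\<^esub> q = \<sigma> c \<otimes>\<^bsub>Q\<^esub> (inv\<^bsub>Q\<^esub> (\<sigma> c) \<otimes>\<^bsub>Q\<^esub> \<sigma> r)" by (subst cr(3)) (rule refl)
        also have "\<dots> = \<sigma> r" using cu sc[OF cr(2)] by (simp add: Q.m_assoc[symmetric] Q.Units_closed)
        finally show ?thesis by (rule sym)
      qed
      then have "\<pi> i (\<sigma> r) = \<pi> i (\<sigma> c) \<otimes>\<^bsub>Qs i\<^esub> \<pi> i q" using pm[OF i] cu qc(1) by (simp add: Q.Units_closed)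
      then have "\<pi> i (\<sigma> r) \<in> Units (Qs i)" using Cu[OF i cr(1)] qc(2) by simp
      then have rS: "r \<in> S i" using memS cr(2) by simp
      show "q \<in> mult_monoid_gen Q ?Y"
      proof (rule mmg_mem)
        fix M assume M: "M \<subseteq> carrier Q" "\<one>\<^bsub>Q\<^esub> \<in> M" "?Y \<subseteq> M" "\<forall>a\<in>M. \<forall>b\<in>M. a \<otimes>\<^bsub>Q\<^esub> b \<in> M"
        have "\<sigma> r \<in> M" using M(3) rS by blast
        moreover have "inv\<^bsub>Q\<^esub> (\<sigma> c) \<in> M" using M(3) cr(1) unfolding C_def by blast
        ultimately show "q \<in> M" unfolding cr(3) using M(4) by blast
      qed
    qed
    ultimately show "tilde_set R Q \<sigma> (S i) = S' i" unfolding tilde_set_def by blast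
  qed
  have loc: "\<And>i. i \<in> I \<Longrightarrow> is_left_localization R (S i) (Qs i) (\<lambda>r. \<pi> i (\<sigma> r))"
  proof -
    fix i assume i: "i \<in> I"
    interpret Qi: ring "Qs i" by (rule ringQs[OF i])
    from Wex[OF i] obtain w where w: "w \<in> carrier R" "\<pi> i (\<sigma> w) \<in> Units (Qs i)" "\<forall>j\<in>I. j \<noteq> i \<longrightarrow> \<pi> j (\<sigma> w) = \<zero>\<^bsub>Qs j\<^esub>" by blast
    have wS: "w \<in> S i" using w(1,2) memS by simp
    have rep: "\<exists>s\<in>S i. \<exists>r\<in>carrier R. y = inv\<^bsub>Qs i\<^esub> (\<pi> i (\<sigma> s)) \<otimes>\<^bsub>Qs i\<^esub> \<pi> i (\<sigma> r)" if y: "y \<in> carrier (Qs i)" for y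
    proof -
      from single[OF i y] obtain q where q: "q \<in> carrier Q" "\<pi> i q = y" by blast
      from qrep[OF q(1)] obtain c r where cr: "c \<in> C" "r \<in> carrier R" "q = inv\<^bsub>Q\<^esub> (\<sigma> c) \<otimes>\<^bsub>Q\<^esub> \<sigma> r" by blast
      have "y = \<pi> i (inv\<^bsub>Q\<^esub> (\<sigma> c) \<otimes>\<^bsub>Q\<^esub> \<sigma> r)" using q(2) cr(3) by simp
      also have "\<dots> = \<pi> i (inv\<^bsub>Q\<^esub> (\<sigma> c)) \<otimes>\<^bsub>Qs i\<^esub> \<pi> i (\<sigma> r)"
        using pm[OF i] Cunit[OF cr(1)] sc[OF cr(2)] by (simp add: Q.Units_closed)
      also have "\<dots> = inv\<^bsub>Qs i\<^esub> (\<pi> i (\<sigma> c)) \<otimes>\<^bsub>Qs i\<^esub> \<pi> i (\<sigma> r)"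
        using pinv[OF i Cunit[OF cr(1)]] by simp
      finally show ?thesis using cr(1,2) CinS[OF i] by blast
    qed
    have kerS: "\<pi> i (\<sigma> r) = \<zero>\<^bsub>Qs i\<^esub> \<longleftrightarrow> (\<exists>s\<in>S i. s \<otimes>\<^bsub>R\<^esub> r = \<zero>\<^bsub>R\<^esub>)" if r: "r \<in> carrier R" for r
    proof
      assume r0: "\<pi> i (\<sigma> r) = \<zero>\<^bsub>Qs i\<^esub>"
      have "w \<otimes>\<^bsub>R\<^esub> r = \<zero>\<^bsub>R\<^esub>"
      proof (rule compR)
        show "w \<otimes>\<^bsub>R\<^esub> r \<in> carrier R" "\<zero>\<^bsub>R\<^esub> \<in> carrier R" using w(1) r by auto
        fix j assume j: "j \<in> I"
        interpret Qj: ring "Qs j" by (rule ringQs[OF j])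
        show "\<pi> j (\<sigma> (w \<otimes>\<^bsub>R\<^esub> r)) = \<pi> j (\<sigma> \<zero>\<^bsub>R\<^esub>)"
        proof (cases "j = i")
          case True
          then show ?thesis unfolding psm[OF j w(1) r] ps0[OF j] using r0 psc[OF j w(1)] by simp
        next
          case False
          have "\<pi> j (\<sigma> w) = \<zero>\<^bsub>Qs j\<^esub>" using w(3) j False by auto
          then show ?thesis unfolding psm[OF j w(1) r] ps0[OF j] using psc[OF j r] by simp
        qed
      qed
      then show "\<exists>s\<in>S i. s \<otimes>\<^bsub>R\<^esub> r = \<zero>\<^bsub>R\<^esub>" using wS by blast
    next
      assume "\<exists>s\<in>S i. s \<otimes>\<^bsub>R\<^esub> r = \<zero>\<^bsub>R\<^esub>"
      then obtain s where s: "s \<in> S i" "s \<otimes>\<^bsub>R\<^esub> r = \<zero>\<^bsub>R\<^esub>" by blast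
      have su: "\<pi> i (\<sigma> s) \<in> Units (Qs i)" "s \<in> carrier R" using s(1) memS by auto
      have prc: "\<pi> i (\<sigma> r) \<in> carrier (Qs i)" using psc[OF i r] .
      have z: "\<pi> i (\<sigma> s) \<otimes>\<^bsub>Qs i\<^esub> \<pi> i (\<sigma> r) = \<zero>\<^bsub>Qs i\<^esub>" using psm[OF i su(2) r] s(2) ps0[OF i] by simp
      have "\<pi> i (\<sigma> r) = inv\<^bsub>Qs i\<^esub> (\<pi> i (\<sigma> s)) \<otimes>\<^bsub>Qs i\<^esub> (\<pi> i (\<sigma> s) \<otimes>\<^bsub>Qs i\<^esub> \<pi> i (\<sigma> r))"
        using prc su(1) by (simp add: Qi.m_assoc[symmetric] Qi.Units_closed)
      also have "\<dots> = \<zero>\<^bsub>Qs i\<^esub>" unfolding z using su(1) by (simp add: Qi.Units_closed)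
      finally show "\<pi> i (\<sigma> r) = \<zero>\<^bsub>Qs i\<^esub>" .
    qed
    show "is_left_localization R (S i) (Qs i) (\<lambda>r. \<pi> i (\<sigma> r))"
      unfolding is_left_localization_def
      using R(1) ringQs[OF i] S_den[OF i] fh[OF i] memS rep kerS by blast
  qed
  have S'inj: "inj_on S' I" using Sp_dist unfolding inj_on_def by blast
  have SinjI: "inj_on S I" using S_dist unfolding inj_on_def by blast
  show ?thesis
  proof (intro conjI)
    show "\<forall>T\<in>maxDen_l R. regular_elems R \<subseteq> T" unfolding maxR C_def[symmetric] using CinS by blast
    show "maxDen_l R = S ` {1..n}" using maxR unfolding I_def .
    show "maxDen_l Q = S' ` {1..n}" using maxQ unfolding I_def .
    show "bij_betw (tilde_set R Q \<sigma>) (maxDen_l R) (maxDen_l Q)"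
      unfolding maxR maxQ bij_betw_def
    proof
      show "inj_on (tilde_set R Q \<sigma>) (S ` I)"
      proof (rule inj_onI)
        fix x y assume "x \<in> S ` I" "y \<in> S ` I" "tilde_set R Q \<sigma> x = tilde_set R Q \<sigma> y"
        then obtain i j where ij: "i \<in> I" "j \<in> I" "x = S i" "y = S j" "S' i = S' j" using tilde by force
        then have "i = j" using S'inj unfolding inj_on_def by blast
        then show "x = y" using ij by simp
      qed
      show "tilde_set R Q \<sigma> ` S ` I = S' ` I" using tilde by (force simp: image_image)
    qed
    show "\<forall>T\<in>maxDen_l R. {r \<in> carrier R. \<sigma> r \<in> tilde_set R Q \<sigma> T} = T"
      unfolding maxR using tilde pre by auto
    show "\<forall>U\<in>maxDen_l Q. tilde_set R Q \<sigma> {r \<in> carrier R. \<sigma> r \<in> U} = U"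
      unfolding maxQ using tilde pre by auto
    show "\<forall>i\<in>{1..n}. \<exists>\<phi>. is_left_localization R (S i) (Qs i) \<phi>" using loc unfolding I_def by blast
  qed
qed

end
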